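(* Let $d\ge1$, $n\ge3$, $u\in\mathbb{C}\setminus\{0\}$ and let $z,x_1,\ldots,x_{d-1}\in\mathbb{C}$ be the parameters of the Markov trace $\mathrm{tr}$, with $x_0=1$. Then $\mathrm{tr}$ passes to the quotient algebra $\mathrm{CTL}_{d,n}(u)$ if and only if $$(u+1)z^2\sum_{k=0}^{d-1}x_k+(u+2)z\sum_{k=0}^{d-1}E^{(k)}+\sum_{k=0}^{d-1}\mathrm{tr}\big(e_1^{(k)}e_2\big)=0.$$
   Context: The Yokonuma–Hecke algebra $\mathrm{Y}_{d,n}(u)$ is the unital associative $\mathbb{C}$-algebra with generators $g_1,\ldots,g_{n-1},t_1,\ldots,t_n$ and relations: $g_ig_j=g_jg_i$ for $|i-j|>1$; $g_{i+1}g_ig_{i+1}=g_ig_{i+1}g_i$; $t_it_j=t_jt_i$; $t_i^d=1$; $g_it_i=t_{i+1}g_i$; $g_it_{i+1}=t_ig_i$; $g_it_j=t_jg_i$ for $j\ne i,i+1$; $g_i^2=1+(u-1)e_i+(u-1)e_ig_i$, where $e_i=\frac1d\sum_{s=0}^{d-1}t_i^st_{i+1}^{d-s}$; $\mathrm{Y}_{d,n}(u)\subset\mathrm{Y}_{d,n+1}(u)$ naturally. Also $e_i^{(m)}=\frac1d\sum_{s=0}^{d-1}t_i^{m+s}t_{i+1}^{d-s}$. For $w\in S_n$ with reduced expression $s_{i_1}\cdots s_{i_k}$ put $g_w=g_{i_1}\cdots g_{i_k}$; $g_{i,i+1}=\sum_{w\in\langle s_i,s_{i+1}\rangle}g_w$,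 and $c_{i,i+1}=\sum_{a,b,c=0}^{d-1}t_i^at_{i+1}^bt_{i+2}^c\,g_{i,i+1}$ for $1\le i\le n-2$. $\mathrm{CTL}_{d,n}(u)$ is the quotient of $\mathrm{Y}_{d,n}(u)$ by the two-sided ideal generated by all $c_{i,i+1}$. For complex $z,x_1,\ldots,x_{d-1}$, $\mathrm{tr}$ is the unique linear map on $\bigcup_n\mathrm{Y}_{d,n}(u)$ with $\mathrm{tr}(ab)=\mathrm{tr}(ba)$, $\mathrm{tr}(1)=1$, $\mathrm{tr}(ag_n)=z\,\mathrm{tr}(a)$, $\mathrm{tr}(at_{n+1}^s)=x_s\,\mathrm{tr}(a)$ for $a,b\in\mathrm{Y}_{d,n}(u)$. Indices of $x$ are taken mod $d$ and $E^{(m)}=\frac1d\sum_{s=0}^{d-1}x_{m+s}x_{d-s}$. "$\mathrm{tr}$ passes to $\mathrm{CTL}_{d,n}(u)$" means $\mathrm{tr}$ vanishes on the defining ideal. *)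

theory Defs
  imports Complex_Main
begin

text \<open>Generators of the Yokonuma-Hecke algebras: G i stands for g_i, T i for t_i (i >= 1).
  Elements of the free algebra over the complex numbers are represented as formal
  finite linear combinations of words, i.e. lists of (coefficient, word) pairs.\<close>

datatype gen = G nat | T nat

type_synonym fsum = "(complex \<times> gen list) list"

definition wd :: "gen list \<Rightarrow> fsum" where
  "wd w = [(1, w)]"

definition one :: fsum where
  "one = [(1, [])]"

definition fmul :: "fsum \<Rightarrow> fsum \<Rightarrow> fsum" where
  "fmul p q = [(fst a * fst b, snd a @ snd b). a \<leftarrow> p, b \<leftarrow> q]"

definition fscale :: "complex \<Rightarrow> fsum \<Rightarrow> fsum" where
  "fscale c p = map (\<lambda>(c', w). (c * c', w)) p"

definition fminus :: "fsum \<Rightarrow> fsum \<Rightarrow> fsum" where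
  "fminus p q = p @ fscale (-1) q"

definition ftr :: "(gen list \<Rightarrow> complex) \<Rightarrow> fsum \<Rightarrow> complex" where
  "ftr tr p = (\<Sum>a\<leftarrow>p. fst a * tr (snd a))"

definition ee :: "nat \<Rightarrow> nat \<Rightarrow> nat \<Rightarrow> fsum" where
  "ee d m i = [(1 / of_nat d, replicate (m + s) (T i) @ replicate (d - s) (T (Suc i))). s \<leftarrow> [0..<d]]"

text \<open>Defining relations of Y_{d,n}(u) (for all n), written as lhs - rhs.\<close>
definition yh_rels :: "nat \<Rightarrow> complex \<Rightarrow> fsum set" where
  "yh_rels d u =
     {fminus (wd [G i, G j]) (wd [G j, G i]) | i j. 1 \<le> i \<and> 1 \<le> j \<and> (i + 1 < j \<or> j + 1 < i)}
   \<union> {fminus (wd [G (i+1), G i, G (i+1)]) (wd [G i, G (i+1), G i]) | i. 1 \<le> i}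
   \<union> {fminus (wd [T i, T j]) (wd [T j, T i]) | i j. 1 \<le> i \<and> 1 \<le> j}
   \<union> {fminus (wd (replicate d (T i))) one | i. 1 \<le> i}
   \<union> {fminus (wd [G i, T i]) (wd [T (i+1), G i]) | i. 1 \<le> i}
   \<union> {fminus (wd [G i, T (i+1)]) (wd [T i, G i]) | i. 1 \<le> i}
   \<union> {fminus (wd [G i, T j]) (wd [T j, G i]) | i j. 1 \<le> i \<and> 1 \<le> j \<and> j \<noteq> i \<and> j \<noteq> i + 1}
   \<union> {fminus (wd [G i, G i])
        (one @ fscale (u - 1) (ee d 0 i) @ fscale (u - 1) (fmul (ee d 0 i) (wd [G i]))) | i. 1 \<le> i}"

definition valid_word :: "gen list \<Rightarrow> bool" where
  "valid_word w = (\<forall>g\<in>set w. case g of G i \<Rightarrow> 1 \<le> i | T i \<Rightarrow> 1 \<le> i)"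

text \<open>Words in the generators of Y_{d,n}: g_1..g_{n-1}, t_1..t_n.\<close>
definition words :: "nat \<Rightarrow> gen list set" where
  "words n = {w. \<forall>g\<in>set w. case g of G i \<Rightarrow> 1 \<le> i \<and> i < n | T i \<Rightarrow> 1 \<le> i \<and> i \<le> n}"

text \<open>tr is (the values on words of) the Markov trace with parameters z, x_1..x_{d-1}:
  its linear extension vanishes on the ideal of defining relations (so it is a linear map
  on the union of the Y_{d,n}(u)), and it satisfies the trace/Markov rules.\<close>
definition markov_trace ::
  "nat \<Rightarrow> complex \<Rightarrow> complex \<Rightarrow> (nat \<Rightarrow> complex) \<Rightarrow> (gen list \<Rightarrow> complex) \<Rightarrow> bool" where
  "markov_trace d u z x tr \<longleftrightarrow>
     (\<forall>r\<in>yh_rels d u. \<forall>a b. valid_word a \<longrightarrow> valid_word b \<longrightarrow>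
          ftr tr (fmul (fmul (wd a) r) (wd b)) = 0)
   \<and> (\<forall>a b. valid_word a \<longrightarrow> valid_word b \<longrightarrow> tr (a @ b) = tr (b @ a))
   \<and> tr [] = 1
   \<and> (\<forall>n a. 1 \<le> n \<longrightarrow> a \<in> words n \<longrightarrow> tr (a @ [G n]) = z * tr a)
   \<and> (\<forall>n a s. a \<in> words n \<longrightarrow> 1 \<le> s \<longrightarrow> s < d \<longrightarrow>
          tr (a @ replicate s (T (Suc n))) = x s * tr a)"

text \<open>g_{i,i+1} = sum of g_w over w in <s_i, s_{i+1}>.\<close>
definition gsum :: "nat \<Rightarrow> fsum" where
  "gsum i = one @ wd [G i] @ wd [G (i+1)] @ wd [G i, G (i+1)] @ wd [G (i+1), G i]
            @ wd [G i, G (i+1), G i]"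

definition cc :: "nat \<Rightarrow> nat \<Rightarrow> fsum" where
  "cc d i = fmul [(1, replicate a (T i) @ replicate b (T (i+1)) @ replicate c (T (i+2))).
                   a \<leftarrow> [0..<d], b \<leftarrow> [0..<d], c \<leftarrow> [0..<d]] (gsum i)"

definition EE :: "nat \<Rightarrow> (nat \<Rightarrow> complex) \<Rightarrow> nat \<Rightarrow> complex" where
  "EE d x m = (1 / of_nat d) * (\<Sum>s<d. x ((m + s) mod d) * x ((d - s) mod d))"

end

theory Submission
  imports Defs "HOL-Library.Multiset"
begin


lemma ftr_Nil[simp]: "ftr f [] = 0" by (simp add: ftr_def)
lemma ftr_Cons[simp]: "ftr f (a # p) = fst a * f (snd a) + ftr f p" by (simp add: ftr_def)
lemma ftr_append[simp]: "ftr f (p @ q) = ftr f p + ftr f q" by (simp add: ftr_def)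
lemma ftr_wd[simp]: "ftr f (wd w) = f w" by (simp add: wd_def)
lemma ftr_one[simp]: "ftr f one = f []" by (simp add: one_def)
lemma ftr_fscale[simp]: "ftr f (fscale c p) = c * ftr f p"
  by (induct p) (auto simp: fscale_def algebra_simps)
lemma ftr_fminus[simp]: "ftr f (fminus p q) = ftr f p - ftr f q"
  by (simp add: fminus_def)
lemma ftr_concat: "ftr f (concat ps) = (\<Sum>p\<leftarrow>ps. ftr f p)"
  by (induct ps) auto
lemma ftr_map: "ftr f (map g xs) = (\<Sum>a\<leftarrow>xs. fst (g a) * f (snd (g a)))"
  by (induct xs) auto
lemma ftr_fmul: "ftr f (fmul p q) = (\<Sum>a\<leftarrow>p. fst a * ftr (\<lambda>w. f (snd a @ w)) q)"
proof (induct p)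
  case Nil then show ?case by (simp add: fmul_def)
next
  case (Cons a p)
  have "ftr f (fmul (a#p) q) = ftr f (map (\<lambda>b. (fst a * fst b, snd a @ snd b)) q) + ftr f (fmul p q)"
    by (simp add: fmul_def)
  also have "ftr f (map (\<lambda>b. (fst a * fst b, snd a @ snd b)) q) = fst a * ftr (\<lambda>w. f (snd a @ w)) q"
    by (induct q) (auto simp: algebra_simps)
  finally show ?case using Cons by simp
qed

lemma ftr_ctx: "ftr tr (fmul (fmul (wd a) r) (wd b)) = ftr (\<lambda>w. tr (a @ w @ b)) r"
  unfolding ftr_fmul ftr_wd by (simp add: ftr_def wd_def fmul_def comp_def)

lemma sum_list_upt0: "(\<Sum>a\<leftarrow>[0..<n]. f a) = (\<Sum>a<n. f a)"
  by (simp add: interv_sum_list_conv_sum_set_nat atLeast0LessThan)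

lemma valid_append[simp]: "valid_word (a @ b) \<longleftrightarrow> valid_word a \<and> valid_word b"
  by (auto simp: valid_word_def)
lemma valid_Cons_G[simp]: "valid_word (G i # b) \<longleftrightarrow> 1 \<le> i \<and> valid_word b"
  by (auto simp: valid_word_def)
lemma valid_Cons_T[simp]: "valid_word (T i # b) \<longleftrightarrow> 1 \<le> i \<and> valid_word b"
  by (auto simp: valid_word_def)
lemma valid_Nil[simp]: "valid_word []" by (simp add: valid_word_def)
lemma valid_rep[simp]: "valid_word (replicate k g) \<longleftrightarrow> k = 0 \<or> valid_word [g]"
  by (auto simp: valid_word_def)

lemma words_append[simp]: "a @ b \<in> words n \<longleftrightarrow> a \<in> words n \<and> b \<in> words n"
  by (auto simp: words_def)
lemma words_Cons_G[simp]: "G i # b \<in> words n \<longleftrightarrow> 1 \<le> i \<and> i < n \<and> b \<in> words n"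
  by (auto simp: words_def)
lemma words_Cons_T[simp]: "T i # b \<in> words n \<longleftrightarrow> 1 \<le> i \<and> i \<le> n \<and> b \<in> words n"
  by (auto simp: words_def)
lemma words_Nil[simp]: "[] \<in> words n" by (simp add: words_def)
lemma words_rep[simp]: "replicate k g \<in> words n \<longleftrightarrow> k = 0 \<or> [g] \<in> words n"
  by (auto simp: words_def)
lemma words_mono: "w \<in> words n \<Longrightarrow> n \<le> m \<Longrightarrow> w \<in> words m"
  by (auto simp: words_def split: gen.splits)
lemma words_valid: "w \<in> words n \<Longrightarrow> valid_word w"
  by (auto simp: words_def valid_word_def split: gen.splits)

lemma sum_shift1: "(\<forall>a. g (a + (d::nat)) = g a) \<Longrightarrow> (\<Sum>a<d. g (Suc a)) = (\<Sum>a<d. g a)"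
proof (cases d)
  case 0 then show ?thesis by simp
next
  case (Suc e)
  assume p: "\<forall>a. g (a + d) = g a"
  have "(\<Sum>a<d. g (Suc a)) = (\<Sum>a<e. g (Suc a)) + g (Suc e)" using Suc by simp
  also have "g (Suc e) = g 0" using p[rule_format, of 0] Suc by simp
  also have "(\<Sum>a<e. g (Suc a)) + g 0 = (\<Sum>a<d. g a)" using Suc sum.lessThan_Suc_shift[of g e] by (simp add: add.commute)
  finally show ?thesis .
qed

lemma sum_shift: "(\<forall>a. g (a + (d::nat)) = g a) \<Longrightarrow> (\<Sum>a<d. g (a + k)) = (\<Sum>a<d. g a)"
proof (induct k arbitrary: g)
  case 0 then show ?case by simp
next
  case (Suc k)
  have "(\<Sum>a<d. g (a + Suc k)) = (\<Sum>a<d. (\<lambda>b. g (b + k)) (Suc a))" by simp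
  also have "\<dots> = (\<Sum>a<d. g (a + k))"
    by (rule sum_shift1) (use Suc.prems in \<open>metis add.commute add.left_commute\<close>)
  finally show ?case using Suc by simp
qed

lemma sum_shift_mod: "(\<Sum>a<d. f ((a + k) mod d)) = (\<Sum>a<(d::nat). f a)"
proof -
  have "(\<Sum>a<d. f ((a + k) mod d)) = (\<Sum>a<d. f (a mod d))"
    by (rule sum_shift[where g="\<lambda>a. f (a mod d)"]) simp
  also have "\<dots> = (\<Sum>a<d. f a)" by (rule sum.cong) auto
  finally show ?thesis .
qed

lemma sum_shift_mod': "(\<Sum>a<d. f ((k + a) mod d)) = (\<Sum>a<(d::nat). f a)"
  using sum_shift_mod[of f k d] by (simp add: add.commute)

lemma sum_reflect: "(\<Sum>s<d. f ((d - s) mod d)) = (\<Sum>s<(d::nat). f s)"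
proof -
  have "(\<Sum>s<d. f ((d - s) mod d)) = (\<Sum>s<d. (\<lambda>t. f ((t + 1) mod d)) (d - Suc s))"
    by (rule sum.cong) (auto simp: Suc_diff_Suc)
  also have "\<dots> = (\<Sum>t<d. f ((t + 1) mod d))" by (rule sum.nat_diff_reindex)
  also have "\<dots> = (\<Sum>t<d. f t)" by (rule sum_shift_mod)
  finally show ?thesis .
qed


definition sw :: "nat \<Rightarrow> nat \<Rightarrow> nat" where
  "sw i j = (if j = i then Suc i else if j = Suc i then i else j)"

definition tw :: "gen list \<Rightarrow> bool" where
  "tw v \<longleftrightarrow> (\<forall>g\<in>set v. \<exists>i. 1 \<le> i \<and> g = T i)"

lemma tw_simps[simp]: "tw [] " "tw (g # v) \<longleftrightarrow> (\<exists>i. 1 \<le> i \<and> g = T i) \<and> tw v"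
  "tw (v @ w) \<longleftrightarrow> tw v \<and> tw w" "tw (replicate k (T i)) \<longleftrightarrow> k = 0 \<or> 1 \<le> i"
  by (auto simp: tw_def)

lemma tw_valid: "tw v \<Longrightarrow> valid_word v"
  by (auto simp: tw_def valid_word_def)

definition Ew :: "nat \<Rightarrow> nat \<Rightarrow> nat \<Rightarrow> gen list" where
  "Ew d i s = replicate s (T i) @ replicate (d - s) (T (Suc i))"

locale MT =
  fixes d :: nat and u z :: complex and x :: "nat \<Rightarrow> complex" and tr :: "gen list \<Rightarrow> complex"
  assumes mt: "markov_trace d u z x tr" and d1: "1 \<le> d" and x0: "x 0 = 1" and u0: "u \<noteq> 0"
begin

lemma rel0: "r \<in> yh_rels d u \<Longrightarrow> valid_word a \<Longrightarrow> valid_word b \<Longrightarrow> ftr (\<lambda>w. tr (a @ w @ b)) r = 0"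
  using mt unfolding markov_trace_def by (metis ftr_ctx)

lemma trc: "valid_word a \<Longrightarrow> valid_word b \<Longrightarrow> tr (a @ b) = tr (b @ a)"
  using mt unfolding markov_trace_def by blast

lemma tr_Nil: "tr [] = 1"
  using mt unfolding markov_trace_def by blast

lemma mG: "1 \<le> n \<Longrightarrow> a \<in> words n \<Longrightarrow> tr (a @ [G n]) = z * tr a"
  using mt unfolding markov_trace_def by blast

lemma mT: "a \<in> words n \<Longrightarrow> 1 \<le> s \<Longrightarrow> s < d \<Longrightarrow> tr (a @ replicate s (T (Suc n))) = x s * tr a"
  using mt unfolding markov_trace_def by blast

definition weq :: "gen list \<Rightarrow> gen list \<Rightarrow> bool" where
  "weq v w \<longleftrightarrow> (\<forall>a b. valid_word a \<longrightarrow> valid_word b \<longrightarrow> tr (a @ v @ b) = tr (a @ w @ b))"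

lemma weq_refl[simp]: "weq v v" by (simp add: weq_def)
lemma weq_sym: "weq v w \<Longrightarrow> weq w v" by (simp add: weq_def)
lemma weq_trans[trans]: "weq v w \<Longrightarrow> weq w y \<Longrightarrow> weq v y" by (simp add: weq_def)
lemma weq_tr: "weq v w \<Longrightarrow> valid_word a \<Longrightarrow> valid_word b \<Longrightarrow> tr (a @ v @ b) = tr (a @ w @ b)"
  by (simp add: weq_def)
lemma weq_tr0: "weq v w \<Longrightarrow> tr v = tr w"
  using weq_tr[of v w "[]" "[]"] by simp
lemma weq_ctx: "weq v w \<Longrightarrow> valid_word p \<Longrightarrow> valid_word q \<Longrightarrow> weq (p @ v @ q) (p @ w @ q)"
  unfolding weq_def
proof (intro allI impI)
  fix a b assume h: "\<forall>a b. valid_word a \<longrightarrow> valid_word b \<longrightarrow> tr (a @ v @ b) = tr (a @ w @ b)"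
    "valid_word p" "valid_word q" "valid_word a" "valid_word b"
  have "tr ((a @ p) @ v @ (q @ b)) = tr ((a @ p) @ w @ (q @ b))" using h(1)[rule_format, of "a @ p" "q @ b"] h by simp
  then show "tr (a @ (p @ v @ q) @ b) = tr (a @ (p @ w @ q) @ b)" by simp
qed
lemma weq_ctxL: "weq v w \<Longrightarrow> valid_word p \<Longrightarrow> weq (p @ v) (p @ w)"
  using weq_ctx[of v w p "[]"] by simp
lemma weq_ctxR: "weq v w \<Longrightarrow> valid_word q \<Longrightarrow> weq (v @ q) (w @ q)"
  using weq_ctx[of v w "[]" q] by simp
lemma weq_Cons: "weq v w \<Longrightarrow> valid_word [g] \<Longrightarrow> weq (g # v) (g # w)"
  using weq_ctx[of v w "[g]" "[]"] by simp
lemma weq_app: "weq v w \<Longrightarrow> weq v' w' \<Longrightarrow> valid_word v' \<Longrightarrow> valid_word w \<Longrightarrow> weq (v @ v') (w @ w')"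
  by (meson weq_ctxL weq_ctxR weq_trans)

lemma rel_weq: "fminus (wd v) (wd w) \<in> yh_rels d u \<Longrightarrow> weq v w"
  unfolding weq_def
proof (intro allI impI)
  fix a b assume "fminus (wd v) (wd w) \<in> yh_rels d u" "valid_word a" "valid_word b"
  from rel0[OF this] show "tr (a @ v @ b) = tr (a @ w @ b)" by simp
qed

lemma R1: "1 \<le> i \<Longrightarrow> 1 \<le> j \<Longrightarrow> i + 1 < j \<or> j + 1 < i \<Longrightarrow> weq [G i, G j] [G j, G i]"
  apply (rule rel_weq) unfolding yh_rels_def apply (rule UnI1)+ by blast
lemma R2: "1 \<le> i \<Longrightarrow> weq [G (Suc i), G i, G (Suc i)] [G i, G (Suc i), G i]"
  apply (rule rel_weq) unfolding yh_rels_def apply (rule UnI1 UnI1 UnI1 UnI1 UnI1 UnI1 UnI2) by auto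
lemma R3: "1 \<le> i \<Longrightarrow> 1 \<le> j \<Longrightarrow> weq [T i, T j] [T j, T i]"
  apply (rule rel_weq) unfolding yh_rels_def apply (rule UnI1 UnI1 UnI1 UnI1 UnI1 UnI2) by blast
lemma R4: "1 \<le> i \<Longrightarrow> weq (replicate d (T i)) []"
proof -
  assume i: "1 \<le> i"
  have "fminus (wd (replicate d (T i))) one \<in> yh_rels d u" unfolding yh_rels_def apply (rule UnI1 UnI1 UnI1 UnI1 UnI2) using i by blast
  then show ?thesis unfolding weq_def using rel0 by fastforce
qed
lemma R5: "1 \<le> i \<Longrightarrow> weq [G i, T i] [T (Suc i), G i]"
  apply (rule rel_weq) unfolding yh_rels_def apply (rule UnI1 UnI1 UnI1 UnI2) by auto
lemma R6: "1 \<le> i \<Longrightarrow> weq [G i, T (Suc i)] [T i, G i]"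
  apply (rule rel_weq) unfolding yh_rels_def apply (rule UnI1 UnI1 UnI2) by auto
lemma R7: "1 \<le> i \<Longrightarrow> 1 \<le> j \<Longrightarrow> j \<noteq> i \<Longrightarrow> j \<noteq> Suc i \<Longrightarrow> weq [G i, T j] [T j, G i]"
  apply (rule rel_weq) unfolding yh_rels_def apply (rule UnI1 UnI2) by auto

lemma ftr_ee: "ftr f (ee d m i) = 1 / of_nat d * (\<Sum>s<d. f (replicate (m + s) (T i) @ replicate (d - s) (T (Suc i))))"
  by (simp add: ee_def ftr_map sum_list_upt0 sum_distrib_left)

lemma ftr_ee_G: "ftr f (fmul (ee d m i) (wd w)) = 1 / of_nat d * (\<Sum>s<d. f (replicate (m + s) (T i) @ replicate (d - s) (T (Suc i)) @ w))"
  by (simp add: ee_def ftr_fmul ftr_map sum_list_upt0 sum_distrib_left)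

lemma quad: assumes "1 \<le> i" "valid_word p" "valid_word q"
  shows "tr (p @ G i # G i # q) = tr (p @ q)
     + (u - 1) * (1 / of_nat d * (\<Sum>s<d. tr (p @ Ew d i s @ q)))
     + (u - 1) * (1 / of_nat d * (\<Sum>s<d. tr (p @ Ew d i s @ G i # q)))"
proof -
  let ?r = "fminus (wd [G i, G i]) (one @ fscale (u - 1) (ee d 0 i) @ fscale (u - 1) (fmul (ee d 0 i) (wd [G i])))"
  have "?r \<in> yh_rels d u" unfolding yh_rels_def apply (rule UnI2) using assms(1) by blast
  from rel0[OF this assms(2,3)] show ?thesis
    by (simp add: ftr_ee ftr_ee_G Ew_def)
qed

lemma tw_move: "tw v \<Longrightarrow> 1 \<le> i \<Longrightarrow> weq (T i # v) (v @ [T i])"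
proof (induct v)
  case Nil then show ?case by simp
next
  case (Cons g v)
  then obtain j where j: "1 \<le> j" "g = T j" "tw v" by auto
  have "weq (T i # T j # v) (T j # T i # v)"
    using R3[of i j] weq_ctxR[of "[T i, T j]" "[T j, T i]" v] j Cons tw_valid by auto
  also have "weq (T j # T i # v) (T j # v @ [T i])"
    using weq_Cons[OF Cons(1)] j Cons by auto
  finally show ?case using j by simp
qed

lemma tw_perm: "tw v \<Longrightarrow> mset v = mset w \<Longrightarrow> weq v w"
proof (induct v arbitrary: w)
  case Nil then show ?case by (metis mset_zero_iff mset.simps(1) weq_refl)
next
  case (Cons g v)
  then obtain i where i: "1 \<le> i" "g = T i" "tw v" by auto
  have "g \<in> set w" using Cons(3) by (metis list.set_intros(1) set_mset_mset)
  then obtain w1 w2 where w: "w = w1 @ g # w2" by (meson split_list)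
  have twW: "tw w" using Cons(2,3) unfolding tw_def by (metis set_mset_mset)
  have "mset v = mset (w1 @ w2)" using Cons(3) w by simp
  then have "weq v (w1 @ w2)" using Cons(1) i by blast
  then have "weq (g # v) (g # w1 @ w2)" using weq_Cons i by auto
  also have "weq (g # w1 @ w2) (w1 @ g # w2)"
  proof -
    have tw1: "tw w1" "tw w2" using twW w by auto
    have "weq ((T i # w1) @ w2) ((w1 @ [T i]) @ w2)"
      by (rule weq_ctxR[OF tw_move[OF tw1(1) i(1)]]) (use tw1 tw_valid in auto)
    then show ?thesis using i(2) by simp
  qed
  finally show ?case using w by simp
qed

lemma tw_norm_aux:
  "\<forall>v w. length v + length w = N \<longrightarrow> tw v \<longrightarrow> tw w \<longrightarrow>
     (\<forall>i. count (mset v) (T i) mod d = count (mset w) (T i) mod d) \<longrightarrow> weq v w"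
proof (induct N rule: less_induct)
  case (less N)
  have red: "\<exists>v'. weq v v' \<and> tw v' \<and> length v' < length v \<and>
     (\<forall>j. count (mset v') (T j) mod d = count (mset v) (T j) mod d)"
    if tv: "tw v" and c: "d \<le> count (mset v) (T i)" for v i
  proof -
    let ?c = "count (mset v) (T i)"
    define v' where "v' = filter (\<lambda>g. g \<noteq> T i) v @ replicate (?c - d) (T i)"
    have "count (mset v) (T i) \<noteq> 0" using c d1 by linarith
    then have "T i \<in> set v" by (metis count_mset_0_iff)
    then have i1: "1 \<le> i" using tv unfolding tw_def by auto
    have ms: "mset v = mset (replicate d (T i) @ v')"
      by (rule multiset_eqI) (use c in \<open>auto simp: v'_def mset_filter\<close>)
    have tv': "tw v'" using tv i1 unfolding v'_def tw_def by auto
    have "weq v (replicate d (T i) @ v')" using tw_perm[OF tv ms] .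
    also have "weq (replicate d (T i) @ v') v'"
      using weq_ctxR[OF R4[OF i1], of v'] tv' tw_valid by simp
    finally have "weq v v'" .
    moreover have "length v' < length v"
    proof -
      have "length v = length (replicate d (T i) @ v')" using ms by (metis size_mset)
      then show ?thesis using d1 by simp
    qed
    moreover have "\<forall>j. count (mset v') (T j) mod d = count (mset v) (T j) mod d"
    proof
      fix j show "count (mset v') (T j) mod d = count (mset v) (T j) mod d"
        using ms by (metis count_union add.commute mod_add_self2 count_replicate_mset
            mset_append mset_replicate mod_0 add_0 gen.inject(2))
    qed
    ultimately show ?thesis using tv' by blast
  qed
  show ?case
  proof (intro allI impI)
    fix v w assume N: "length v + length w = N" and tv: "tw v" and tw: "tw w"
      and c: "\<forall>i. count (mset v) (T i) mod d = count (mset w) (T i) mod d"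
    show "weq v w"
    proof (cases "\<exists>i. d \<le> count (mset v) (T i)")
      case True
      then obtain i where "d \<le> count (mset v) (T i)" by blast
      from red[OF tv this] obtain v' where v': "weq v v'" "tw v'" "length v' < length v"
        "\<forall>j. count (mset v') (T j) mod d = count (mset v) (T j) mod d" by blast
      have "weq v' w" using less[rule_format, of "length v' + length w" v' w] v' N tw c by auto
      then show ?thesis using v' weq_trans by blast
    next
      case F1: False
      show ?thesis
      proof (cases "\<exists>i. d \<le> count (mset w) (T i)")
        case True
        then obtain i where "d \<le> count (mset w) (T i)" by blast
        from red[OF tw this] obtain w' where w': "weq w w'" "tw w'" "length w' < length w"
          "\<forall>j. count (mset w') (T j) mod d = count (mset w) (T j) mod d" by blast
        have "weq v w'" using less[rule_format, of "length v + length w'" v w'] w' N tv c by auto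
        then show ?thesis using w' weq_trans weq_sym by blast
      next
        case False
        have "mset v = mset w"
        proof (rule multiset_eqI)
          fix g show "count (mset v) g = count (mset w) g"
          proof (cases g)
            case (T i)
            then show ?thesis using c[rule_format, of i] F1 False by (metis mod_less not_le)
          next
            case (G i)
            then have "g \<notin> set v" "g \<notin> set w" using tv tw unfolding tw_def by auto
            then show ?thesis by (metis count_mset_0_iff)
          qed
        qed
        then show ?thesis using tw_perm tv by blast
      qed
    qed
  qed
qed

lemma tw_norm: "tw v \<Longrightarrow> tw w \<Longrightarrow> (\<forall>i. count (mset v) (T i) mod d = count (mset w) (T i) mod d) \<Longrightarrow> weq v w"
  using tw_norm_aux by blast

lemma mTk: "a \<in> words n \<Longrightarrow> tr (a @ replicate k (T (Suc n))) = x (k mod d) * tr a"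
proof -
  assume a: "a \<in> words n"
  have "weq (replicate k (T (Suc n))) (replicate (k mod d) (T (Suc n)))"
    by (rule tw_norm) auto
  then have "tr (a @ replicate k (T (Suc n))) = tr (a @ replicate (k mod d) (T (Suc n)))"
    using weq_tr[of _ _ a "[]"] words_valid[OF a] by simp
  also have "\<dots> = x (k mod d) * tr a"
  proof (cases "k mod d = 0")
    case True then show ?thesis by (simp add: x0)
  next
    case False then show ?thesis using mT[OF a, of "k mod d"] d1 by simp
  qed
  finally show ?thesis .
qed

end


definition tsw :: "nat \<Rightarrow> gen \<Rightarrow> gen" where
  "tsw i g = (case g of T j \<Rightarrow> T (sw i j) | G j \<Rightarrow> G j)"

lemma tsw_T[simp]: "tsw i (T j) = T (sw i j)" by (simp add: tsw_def)

lemma sepT_words: "w \<in> words (Suc N) \<Longrightarrow> G N \<notin> set w \<Longrightarrow> filter (\<lambda>g. g \<noteq> T (Suc N)) w \<in> words N"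
  unfolding words_def
proof (intro CollectI ballI)
  fix g assume w: "w \<in> {w. \<forall>g\<in>set w. case g of G i \<Rightarrow> 1 \<le> i \<and> i < Suc N | T i \<Rightarrow> 1 \<le> i \<and> i \<le> Suc N}"
    and n: "G N \<notin> set w" and g: "g \<in> set (filter (\<lambda>g. g \<noteq> T (Suc N)) w)"
  then have g1: "g \<in> set w" "g \<noteq> T (Suc N)" by auto
  have c: "case g of G i \<Rightarrow> 1 \<le> i \<and> i < Suc N | T i \<Rightarrow> 1 \<le> i \<and> i \<le> Suc N" using w g1(1) by blast
  have "g \<noteq> G N" using n g1(1) by blast
  then show "case g of G i \<Rightarrow> 1 \<le> i \<and> i < N | T i \<Rightarrow> 1 \<le> i \<and> i \<le> N"
    using c g1(2) by (cases g) (auto simp: less_Suc_eq)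
qed

lemma sw_ge1: "1 \<le> i \<Longrightarrow> 1 \<le> j \<Longrightarrow> 1 \<le> sw i j" by (auto simp: sw_def)
lemma sw_sw[simp]: "sw i (sw i j) = j" by (auto simp: sw_def)
lemma sw_simps[simp]: "sw i i = Suc i" "sw i (Suc i) = i" by (auto simp: sw_def)

context MT begin

lemma rel_gt: "1 \<le> i \<Longrightarrow> 1 \<le> j \<Longrightarrow> weq [G i, T j] [T (sw i j), G i]"
  using R5[of i] R6[of i] R7[of i j] by (auto simp: sw_def)

lemma gtw: "tw v \<Longrightarrow> 1 \<le> i \<Longrightarrow> weq (G i # v) (map (tsw i) v @ [G i])"
proof (induct v)
  case Nil then show ?case by simp
next
  case (Cons g v)
  then obtain j where j: "1 \<le> j" "g = T j" "tw v" by auto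
  have "weq ([G i, T j] @ v) ([T (sw i j), G i] @ v)"
    by (rule weq_ctxR[OF rel_gt]) (use j Cons tw_valid in auto)
  also have "weq ([T (sw i j), G i] @ v) (T (sw i j) # (map (tsw i) v @ [G i]))"
    using weq_Cons[OF Cons(1)] j Cons sw_ge1 by auto
  finally show ?case using j by simp
qed

lemma gt_rep: "1 \<le> i \<Longrightarrow> 1 \<le> j \<Longrightarrow> weq (G i # replicate k (T j)) (replicate k (T (sw i j)) @ [G i])"
  using gtw[of "replicate k (T j)" i] by (simp add: tsw_def)

lemma tg_rep: "1 \<le> i \<Longrightarrow> 1 \<le> j \<Longrightarrow> weq (replicate k (T j) @ [G i]) (G i # replicate k (T (sw i j)))"
  using gt_rep[of i "sw i j" k] sw_ge1[of i j] by (simp add: weq_sym)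

lemma gw: "y \<in> words m \<Longrightarrow> m < N \<Longrightarrow> weq (G N # y) (y @ [G N])"
proof (induct y)
  case Nil then show ?case by simp
next
  case (Cons g y)
  have yv: "valid_word y" using Cons words_valid by (cases g) auto
  have step: "weq [G N, g] [g, G N]"
  proof (cases g)
    case (G j) then show ?thesis using Cons(2,3) R1[of N j] by auto
  next
    case (T j) then show ?thesis using Cons(2,3) R7[of N j] by auto
  qed
  have gv: "valid_word [g]" using Cons(2) by (cases g) auto
  have "weq ([G N, g] @ y) ([g, G N] @ y)" by (rule weq_ctxR[OF step yv])
  also have "weq ([g, G N] @ y) (g # (y @ [G N]))"
    using weq_Cons[OF Cons(1) gv] Cons(2,3) by (cases g) auto
  finally show ?case by simp
qed

lemma gw_rev: "y \<in> words m \<Longrightarrow> m < N \<Longrightarrow> weq (y @ [G N]) (G N # y)"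
  using gw weq_sym by blast

lemma tw_words: "y \<in> words m \<Longrightarrow> m < K \<Longrightarrow> weq (T K # y) (y @ [T K])"
proof (induct y)
  case Nil then show ?case by simp
next
  case (Cons g y)
  have yv: "valid_word y" using Cons words_valid by (cases g) auto
  have step: "weq [T K, g] [g, T K]"
  proof (cases g)
    case (G j) then show ?thesis using Cons(2,3) R7[of j K] weq_sym by auto
  next
    case (T j) then show ?thesis using Cons(2,3) R3[of K j] by auto
  qed
  have gv: "valid_word [g]" using Cons(2) by (cases g) auto
  have "weq ([T K, g] @ y) ([g, T K] @ y)" by (rule weq_ctxR[OF step yv])
  also have "weq ([g, T K] @ y) (g # (y @ [T K]))"
    using weq_Cons[OF Cons(1) gv] Cons(2,3) by (cases g) auto
  finally show ?case by simp
qed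

lemma trep_words: "y \<in> words m \<Longrightarrow> m < K \<Longrightarrow> weq (replicate k (T K) @ y) (y @ replicate k (T K))"
proof (induct k)
  case 0 then show ?case by simp
next
  case (Suc k)
  have K1: "1 \<le> K" using Suc by simp
  have "weq (T K # (replicate k (T K) @ y)) (T K # (y @ replicate k (T K)))"
    using weq_Cons[OF Suc(1)[OF Suc(2,3)]] K1 by simp
  also have "weq (T K # y @ replicate k (T K)) ((y @ [T K]) @ replicate k (T K))"
    using weq_ctxR[OF tw_words[OF Suc(2,3)], of "replicate k (T K)"] K1 by simp
  finally show ?case by (simp add: replicate_app_Cons_same)
qed

lemma sepT: "w \<in> words (Suc N) \<Longrightarrow> G N \<notin> set w \<Longrightarrow>
   weq w (filter (\<lambda>g. g \<noteq> T (Suc N)) w @ replicate (length (filter (\<lambda>g. g = T (Suc N)) w)) (T (Suc N)))"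
proof (induct w)
  case Nil then show ?case by simp
next
  case (Cons g w)
  let ?f = "filter (\<lambda>g. g \<noteq> T (Suc N)) w" and ?k = "length (filter (\<lambda>g. g = T (Suc N)) w)"
  have IH: "weq w (?f @ replicate ?k (T (Suc N)))" using Cons by (cases g) auto
  have fw: "?f \<in> words N" using Cons(2,3) sepT_words[of w N] by (cases g) auto
  show ?case
  proof (cases "g = T (Suc N)")
    case True
    have "weq (T (Suc N) # w) (T (Suc N) # (?f @ replicate ?k (T (Suc N))))"
      using weq_Cons[OF IH] by simp
    also have "weq (T (Suc N) # ?f @ replicate ?k (T (Suc N))) ((?f @ [T (Suc N)]) @ replicate ?k (T (Suc N)))"
      using weq_ctxR[OF tw_words[OF fw], of "Suc N" "replicate ?k (T (Suc N))"] by simp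
    finally show ?thesis using True by (simp add: replicate_app_Cons_same)
  next
    case False
    have gv: "valid_word [g]" using Cons(2) by (cases g) auto
    show ?thesis using weq_Cons[OF IH gv] False by simp
  qed
qed

end


definition cG :: "nat \<Rightarrow> gen list \<Rightarrow> nat" where "cG N w = length (filter (\<lambda>g. g = G N) w)"

lemma cG_simps[simp]: "cG N [] = 0" "cG N (g # w) = (if g = G N then 1 else 0) + cG N w"
  "cG N (v @ w) = cG N v + cG N w" "cG N (replicate k (T j)) = 0"
  by (auto simp: cG_def)

lemma cG_0: "cG N w = 0 \<longleftrightarrow> G N \<notin> set w"
  by (auto simp: cG_def filter_empty_conv)

lemma cG_words: "y \<in> words m \<Longrightarrow> m \<le> N \<Longrightarrow> cG N y = 0"
proof (induct y)
  case (Cons g y) then show ?case by (cases g) auto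
qed simp

definition allw :: "(gen list \<Rightarrow> bool) \<Rightarrow> (complex \<times> gen list) list \<Rightarrow> bool" where
  "allw Pr Q \<longleftrightarrow> (\<forall>p\<in>set Q. Pr (snd p))"

lemma allw_comb: "(\<forall>c\<in>set P. allw Pr (Qf c)) \<Longrightarrow> allw Pr (concat (map (\<lambda>c. fscale (fst c) (Qf c)) P))"
  unfolding allw_def fscale_def by fastforce

lemma allw_map: "allw Pr' P \<Longrightarrow> (\<And>v. Pr' v \<Longrightarrow> Pr (p @ v @ q)) \<Longrightarrow> allw Pr (map (\<lambda>c. (fst c, p @ snd c @ q)) P)"
  by (auto simp: allw_def)

context MT begin

definition rep :: "gen list \<Rightarrow> (complex \<times> gen list) list \<Rightarrow> bool" where
  "rep w P \<longleftrightarrow> (\<forall>a b. valid_word a \<longrightarrow> valid_word b \<longrightarrow> tr (a @ w @ b) = ftr (\<lambda>v. tr (a @ v @ b)) P)"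

lemma rep_single: "rep w [(1, w)]" by (simp add: rep_def)

lemma rep_weq: "weq w w' \<Longrightarrow> rep w' P \<Longrightarrow> rep w P"
  by (simp add: rep_def weq_def)

lemma rep_ctx: assumes "rep w P" "valid_word p" "valid_word q"
  shows "rep (p @ w @ q) (map (\<lambda>c. (fst c, p @ snd c @ q)) P)"
  unfolding rep_def
proof (intro allI impI)
  fix a b assume ab: "valid_word a" "valid_word b"
  have "tr ((a @ p) @ w @ (q @ b)) = ftr (\<lambda>v. tr ((a @ p) @ v @ (q @ b))) P"
    using assms ab unfolding rep_def by (metis valid_append)
  then show "tr (a @ (p @ w @ q) @ b) = ftr (\<lambda>v. tr (a @ v @ b)) (map (\<lambda>c. (fst c, p @ snd c @ q)) P)"
    by (simp add: ftr_map ftr_def comp_def)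
qed

lemma rep_comb: assumes "rep w P" "\<forall>c\<in>set P. rep (snd c) (Qf c)"
  shows "rep w (concat (map (\<lambda>c. fscale (fst c) (Qf c)) P))"
  unfolding rep_def
proof (intro allI impI)
  fix a b assume ab: "valid_word a" "valid_word b"
  have "tr (a @ w @ b) = (\<Sum>c\<leftarrow>P. fst c * tr (a @ snd c @ b))"
    using assms(1) ab unfolding rep_def ftr_def by simp
  also have "\<dots> = (\<Sum>c\<leftarrow>P. fst c * ftr (\<lambda>v. tr (a @ v @ b)) (Qf c))"
    by (rule arg_cong[where f=sum_list], rule map_cong) (use assms(2) ab in \<open>auto simp: rep_def\<close>)
  also have "\<dots> = ftr (\<lambda>v. tr (a @ v @ b)) (concat (map (\<lambda>c. fscale (fst c) (Qf c)) P))"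
    by (simp add: ftr_concat comp_def)
  finally show "tr (a @ w @ b) = ftr (\<lambda>v. tr (a @ v @ b)) (concat (map (\<lambda>c. fscale (fst c) (Qf c)) P))" .
qed

lemma rep_exists: assumes "rep w P" "\<forall>c\<in>set P. \<exists>Q. allw Pr Q \<and> rep (snd c) Q"
  shows "\<exists>Q. allw Pr Q \<and> rep w Q"
proof -
  from assms(2) obtain Qf where Qf: "\<forall>c\<in>set P. allw Pr (Qf c) \<and> rep (snd c) (Qf c)"
    by metis
  show ?thesis using rep_comb[OF assms(1), of Qf] allw_comb[of P Pr Qf] Qf by blast
qed

lemma rep_quad: assumes "1 \<le> i" "valid_word p"
  shows "rep (p @ [G i, G i]) ([(1, p)] @ map (\<lambda>s. ((u - 1) / of_nat d, p @ Ew d i s)) [0..<d]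
           @ map (\<lambda>s. ((u - 1) / of_nat d, p @ Ew d i s @ [G i])) [0..<d])"
  unfolding rep_def
proof (intro allI impI)
  fix a b assume ab: "valid_word a" "valid_word b"
  have "tr ((a @ p) @ G i # G i # b) = tr ((a @ p) @ b)
     + (u - 1) * (1 / of_nat d * (\<Sum>s<d. tr ((a @ p) @ Ew d i s @ b)))
     + (u - 1) * (1 / of_nat d * (\<Sum>s<d. tr ((a @ p) @ Ew d i s @ G i # b)))"
    by (rule quad) (use assms ab in auto)
  then show "tr (a @ (p @ [G i, G i]) @ b) = ftr (\<lambda>v. tr (a @ v @ b)) ([(1, p)] @ map (\<lambda>s. ((u - 1) / of_nat d, p @ Ew d i s)) [0..<d]
           @ map (\<lambda>s. ((u - 1) / of_nat d, p @ Ew d i s @ [G i])) [0..<d])"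
    by (simp add: ftr_map sum_list_upt0 sum_distrib_left)
qed

definition spanP :: "nat \<Rightarrow> gen list \<Rightarrow> bool" where
  "spanP N w \<longleftrightarrow> (\<exists>Q. allw (\<lambda>v. v \<in> words (Suc N) \<and> cG N v \<le> 1) Q \<and> rep w Q)"

lemma Ew_words: "1 \<le> i \<Longrightarrow> Suc i \<le> n \<Longrightarrow> Ew d i s \<in> words n"
  by (auto simp: Ew_def)
lemma Ew_cG[simp]: "cG N (Ew d i s) = 0" by (simp add: Ew_def)
lemma Ew_valid: "1 \<le> i \<Longrightarrow> valid_word (Ew d i s)" by (simp add: Ew_def)


lemma Klem: assumes v: "v \<in> words (Suc m)" and c: "cG m v \<le> 1"
  shows "\<exists>Q. allw (\<lambda>y. y \<in> words (Suc (Suc m)) \<and> cG (Suc m) y \<le> 1) Q \<and> rep (G (Suc m) # v @ [G (Suc m)]) Q"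
proof (cases "cG m v = 0")
  case True
  define N where "N = Suc m"
  define v' where "v' = filter (\<lambda>g. g \<noteq> T (Suc m)) v"
  define l where "l = length (filter (\<lambda>g. g = T (Suc m)) v)"
  have nG: "G m \<notin> set v" using True cG_0 by blast
  have e1: "weq v (v' @ replicate l (T N))" using sepT[OF v nG] unfolding v'_def l_def N_def .
  have v'w: "v' \<in> words m" using sepT_words[OF v nG] unfolding v'_def .
  have v'v: "valid_word v'" using v'w words_valid by blast
  have N1: "1 \<le> N" "m < N" unfolding N_def by auto
  have s1: "weq (G N # v @ [G N]) (G N # (v' @ replicate l (T N)) @ [G N])"
    using weq_ctx[OF e1, of "[G N]" "[G N]"] N1 by simp
  have s2: "weq (G N # (v' @ replicate l (T N)) @ [G N]) (v' @ G N # replicate l (T N) @ [G N])"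
    using weq_ctxR[OF gw[OF v'w N1(2)], of "replicate l (T N) @ [G N]"] N1 by simp
  have s3: "weq (v' @ G N # replicate l (T N) @ [G N]) ((v' @ replicate l (T (Suc N))) @ [G N, G N])"
    using weq_ctx[OF gt_rep[of N N l], of v' "[G N]"] v'v N1 by simp
  let ?Q = "[(1, v' @ replicate l (T (Suc N)))] @ map (\<lambda>s. ((u - 1) / of_nat d, (v' @ replicate l (T (Suc N))) @ Ew d N s)) [0..<d]
           @ map (\<lambda>s. ((u - 1) / of_nat d, (v' @ replicate l (T (Suc N))) @ Ew d N s @ [G N])) [0..<d]"
  have r: "rep ((v' @ replicate l (T (Suc N))) @ [G N, G N]) ?Q"
    by (rule rep_quad) (use v'v N1 in auto)
  have v'w2: "v' \<in> words (Suc N)" using words_mono[OF v'w] N1 by simp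
  have cv: "cG N v' = 0" using cG_words[OF v'w] N1 by simp
  have w: "allw (\<lambda>y. y \<in> words (Suc N) \<and> cG N y \<le> 1) ?Q"
    unfolding allw_def using v'w2 cv Ew_words[of N "Suc N"] N1 by auto
  show ?thesis using s1 s2 s3 r w rep_weq weq_trans unfolding N_def by meson
next
  case False
  define N where "N = Suc m"
  have N1: "1 \<le> N" "m < N" unfolding N_def by auto
  have c1: "cG m v = 1" using c False by simp
  then have "G m \<in> set v" using cG_0 by force
  then obtain \<rho> \<sigma> where vs: "v = \<rho> @ G m # \<sigma>" and n\<rho>: "G m \<notin> set \<rho>" by (metis split_list_first)
  have n\<sigma>: "G m \<notin> set \<sigma>" using c1 vs n\<rho> cG_0 by force
  have m1: "1 \<le> m" using v vs by simp
  have \<rho>w: "\<rho> \<in> words (Suc m)" "\<sigma> \<in> words (Suc m)" using v vs by auto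
  define \<rho>' where "\<rho>' = filter (\<lambda>g. g \<noteq> T (Suc m)) \<rho>"
  define a where "a = length (filter (\<lambda>g. g = T (Suc m)) \<rho>)"
  define \<sigma>' where "\<sigma>' = filter (\<lambda>g. g \<noteq> T (Suc m)) \<sigma>"
  define b where "b = length (filter (\<lambda>g. g = T (Suc m)) \<sigma>)"
  have e1: "weq \<rho> (\<rho>' @ replicate a (T N))" using sepT[OF \<rho>w(1) n\<rho>] unfolding \<rho>'_def a_def N_def .
  have e2: "weq \<sigma> (\<sigma>' @ replicate b (T N))" using sepT[OF \<rho>w(2) n\<sigma>] unfolding \<sigma>'_def b_def N_def .
  have w1: "\<rho>' \<in> words m" using sepT_words[OF \<rho>w(1) n\<rho>] unfolding \<rho>'_def .
  have w2: "\<sigma>' \<in> words m" using sepT_words[OF \<rho>w(2) n\<sigma>] unfolding \<sigma>'_def .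
  have v1: "valid_word \<rho>'" "valid_word \<sigma>'" "valid_word \<sigma>" using w1 w2 \<rho>w words_valid by blast+
  have s1a: "weq (G N # v @ [G N]) (G N # (\<rho>' @ replicate a (T N)) @ G m # \<sigma> @ [G N])"
    using weq_ctx[OF e1, of "[G N]" "G m # \<sigma> @ [G N]"] N1 m1 v1 vs by simp
  have s1b: "weq (G N # (\<rho>' @ replicate a (T N)) @ G m # \<sigma> @ [G N])
      (G N # (\<rho>' @ replicate a (T N)) @ G m # (\<sigma>' @ replicate b (T N)) @ [G N])"
    using weq_ctx[OF e2, of "G N # (\<rho>' @ replicate a (T N)) @ [G m]" "[G N]"] N1 m1 v1 by simp
  have s2: "weq (G N # (\<rho>' @ replicate a (T N)) @ G m # (\<sigma>' @ replicate b (T N)) @ [G N])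
      (\<rho>' @ G N # replicate a (T N) @ G m # \<sigma>' @ replicate b (T N) @ [G N])"
    using weq_ctxR[OF gw[OF w1 N1(2)], of "replicate a (T N) @ G m # \<sigma>' @ replicate b (T N) @ [G N]"] N1 m1 v1 by simp
  have s3: "weq (\<rho>' @ G N # replicate a (T N) @ G m # \<sigma>' @ replicate b (T N) @ [G N])
      (\<rho>' @ replicate a (T (Suc N)) @ G N # G m # \<sigma>' @ replicate b (T N) @ [G N])"
    using weq_ctx[OF gt_rep[of N N a], of \<rho>' "G m # \<sigma>' @ replicate b (T N) @ [G N]"] N1 m1 v1 by simp
  have s4: "weq (\<rho>' @ replicate a (T (Suc N)) @ G N # G m # \<sigma>' @ replicate b (T N) @ [G N])
      (\<rho>' @ replicate a (T (Suc N)) @ G N # G m # \<sigma>' @ G N # replicate b (T (Suc N)))"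
    using weq_ctx[OF tg_rep[of N N b], of "\<rho>' @ replicate a (T (Suc N)) @ G N # G m # \<sigma>'" "[]"] N1 m1 v1 by simp
  have s5: "weq (\<rho>' @ replicate a (T (Suc N)) @ G N # G m # \<sigma>' @ G N # replicate b (T (Suc N)))
      (\<rho>' @ replicate a (T (Suc N)) @ G N # G m # G N # \<sigma>' @ replicate b (T (Suc N)))"
    using weq_ctx[OF gw_rev[OF w2 N1(2)], of "\<rho>' @ replicate a (T (Suc N)) @ [G N, G m]" "replicate b (T (Suc N))"] N1 m1 v1 by simp
  have s6: "weq (\<rho>' @ replicate a (T (Suc N)) @ G N # G m # G N # \<sigma>' @ replicate b (T (Suc N)))
      (\<rho>' @ replicate a (T (Suc N)) @ G m # G N # G m # \<sigma>' @ replicate b (T (Suc N)))"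
    using weq_ctx[OF R2[OF m1], of "\<rho>' @ replicate a (T (Suc N))" "\<sigma>' @ replicate b (T (Suc N))"] N1 m1 v1
    unfolding N_def by simp
  let ?F = "\<rho>' @ replicate a (T (Suc N)) @ G m # G N # G m # \<sigma>' @ replicate b (T (Suc N))"
  have wF: "?F \<in> words (Suc N)" using words_mono[OF w1, of "Suc N"] words_mono[OF w2, of "Suc N"] N1 m1 by simp
  have cF: "cG N ?F \<le> 1" using cG_words[OF w1, of N] cG_words[OF w2, of N] N1 by simp
  have "weq (G N # v @ [G N]) ?F" using s1a s1b s2 s3 s4 s5 s6 weq_trans by meson
  then have "rep (G N # v @ [G N]) [(1, ?F)]" using rep_weq rep_single by blast
  moreover have "allw (\<lambda>y. y \<in> words (Suc N) \<and> cG N y \<le> 1) [(1, ?F)]" using wF cF by (simp add: allw_def)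
  ultimately show ?thesis unfolding N_def by blast
qed


lemma cG0_valid: "valid_word y \<Longrightarrow> cG 0 y = 0"
  by (auto simp: cG_0 valid_word_def)

lemma span: "w \<in> words (Suc N) \<Longrightarrow> spanP N w"
proof (induct N arbitrary: w)
  case 0
  have "cG 0 w = 0" using cG0_valid words_valid 0 by blast
  then show ?case using 0 rep_single[of w] unfolding spanP_def allw_def by force
next
  case (Suc m)
  define N where "N = Suc m"
  have N1: "1 \<le> N" "m < N" unfolding N_def by auto
  have main: "\<forall>w. cG N w = k \<longrightarrow> w \<in> words (Suc N) \<longrightarrow> spanP N w" for k
  proof (induct k rule: less_induct)
    case (less k)
    show ?case
    proof (intro allI impI)
      fix w assume wk: "cG N w = k" and ww: "w \<in> words (Suc N)"
      show "spanP N w"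
      proof (cases "k \<le> 1")
        case True then show ?thesis using ww wk rep_single[of w] unfolding spanP_def allw_def by force
      next
        case False
        then have "G N \<in> set w" using wk cG_0 by force
        then obtain \<alpha> w1 where ws: "w = \<alpha> @ G N # w1" and n\<alpha>: "G N \<notin> set \<alpha>" by (metis split_list_first)
        have "cG N w1 \<noteq> 0" using False wk ws n\<alpha> cG_0 by force
        then have "G N \<in> set w1" using cG_0 by metis
        then obtain \<beta> \<gamma> where w1s: "w1 = \<beta> @ G N # \<gamma>" and n\<beta>: "G N \<notin> set \<beta>" by (metis split_list_first)
        have kk: "k = 2 + cG N \<gamma>" using wk ws w1s n\<alpha> n\<beta> cG_0 by force
        have ws': "\<alpha> \<in> words (Suc N)" "\<beta> \<in> words (Suc N)" "\<gamma> \<in> words (Suc N)" using ww ws w1s by auto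
        have vs: "valid_word \<alpha>" "valid_word \<beta>" "valid_word \<gamma>" using ws' words_valid by blast+
        define \<beta>' where "\<beta>' = filter (\<lambda>g. g \<noteq> T (Suc N)) \<beta>"
        define kb where "kb = length (filter (\<lambda>g. g = T (Suc N)) \<beta>)"
        have e\<beta>: "weq \<beta> (\<beta>' @ replicate kb (T (Suc N)))" using sepT[OF ws'(2) n\<beta>] unfolding \<beta>'_def kb_def .
        have \<beta>'w: "\<beta>' \<in> words N" using sepT_words[OF ws'(2) n\<beta>] unfolding \<beta>'_def .
        have v\<beta>': "valid_word \<beta>'" using \<beta>'w words_valid by blast
        have s1: "weq w (\<alpha> @ G N # (\<beta>' @ replicate kb (T (Suc N))) @ G N # \<gamma>)"
          using weq_ctx[OF e\<beta>, of "\<alpha> @ [G N]" "G N # \<gamma>"] ws w1s vs N1 by simp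
        have s2: "weq (\<alpha> @ G N # (\<beta>' @ replicate kb (T (Suc N))) @ G N # \<gamma>)
             (\<alpha> @ (G N # \<beta>' @ [G N]) @ (replicate kb (T N) @ \<gamma>))"
          using weq_ctx[OF tg_rep[of N "Suc N" kb], of "\<alpha> @ G N # \<beta>'" \<gamma>] vs v\<beta>' N1 by simp
        obtain Q' where Q': "allw (\<lambda>v. v \<in> words (Suc m) \<and> cG m v \<le> 1) Q'" "rep \<beta>' Q'"
          using Suc.hyps[of \<beta>'] \<beta>'w unfolding spanP_def N_def by blast
        have r1: "rep (G N # \<beta>' @ [G N]) (map (\<lambda>c. (fst c, [G N] @ snd c @ [G N])) Q')"
          using rep_ctx[OF Q'(2), of "[G N]" "[G N]"] N1 by simp
        have "\<forall>c\<in>set (map (\<lambda>c. (fst c, [G N] @ snd c @ [G N])) Q').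
             \<exists>Q. allw (\<lambda>y. y \<in> words (Suc N) \<and> cG N y \<le> 1) Q \<and> rep (snd c) Q"
        proof
          fix c assume "c \<in> set (map (\<lambda>c. (fst c, [G N] @ snd c @ [G N])) Q')"
          then obtain c' where c': "c' \<in> set Q'" "snd c = G N # snd c' @ [G N]" by auto
          have "snd c' \<in> words (Suc m)" "cG m (snd c') \<le> 1" using Q'(1) c'(1) unfolding allw_def by auto
          from Klem[OF this] show "\<exists>Q. allw (\<lambda>y. y \<in> words (Suc N) \<and> cG N y \<le> 1) Q \<and> rep (snd c) Q"
            using c'(2) unfolding N_def by simp
        qed
        from rep_exists[OF r1 this] obtain Q1 where Q1: "allw (\<lambda>y. y \<in> words (Suc N) \<and> cG N y \<le> 1) Q1"
          "rep (G N # \<beta>' @ [G N]) Q1" by blast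
        have r2: "rep (\<alpha> @ (G N # \<beta>' @ [G N]) @ (replicate kb (T N) @ \<gamma>))
            (map (\<lambda>c. (fst c, \<alpha> @ snd c @ (replicate kb (T N) @ \<gamma>))) Q1)"
          by (rule rep_ctx[OF Q1(2)]) (use vs N1 in auto)
        have "\<forall>c\<in>set (map (\<lambda>c. (fst c, \<alpha> @ snd c @ (replicate kb (T N) @ \<gamma>))) Q1).
             \<exists>Q. allw (\<lambda>y. y \<in> words (Suc N) \<and> cG N y \<le> 1) Q \<and> rep (snd c) Q"
        proof
          fix c assume "c \<in> set (map (\<lambda>c. (fst c, \<alpha> @ snd c @ (replicate kb (T N) @ \<gamma>))) Q1)"
          then obtain c' where c': "c' \<in> set Q1" "snd c = \<alpha> @ snd c' @ replicate kb (T N) @ \<gamma>" by auto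
          have y: "snd c' \<in> words (Suc N)" "cG N (snd c') \<le> 1" using Q1(1) c'(1) unfolding allw_def by auto
          have "cG N (snd c) < k" using c'(2) y kk n\<alpha> cG_0 by force
          moreover have "snd c \<in> words (Suc N)" using c'(2) y ws' N1 by simp
          ultimately show "\<exists>Q. allw (\<lambda>y. y \<in> words (Suc N) \<and> cG N y \<le> 1) Q \<and> rep (snd c) Q"
            using less[rule_format, of "cG N (snd c)" "snd c"] unfolding spanP_def by blast
        qed
        from rep_exists[OF r2 this] obtain Q2 where Q2: "allw (\<lambda>y. y \<in> words (Suc N) \<and> cG N y \<le> 1) Q2"
          "rep (\<alpha> @ (G N # \<beta>' @ [G N]) @ (replicate kb (T N) @ \<gamma>)) Q2" by blast
        have "rep w Q2" using rep_weq[OF weq_trans[OF s1 s2] Q2(2)] .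
        then show ?thesis using Q2(1) unfolding spanP_def by blast
      qed
    qed
  qed
  show ?case using main Suc.prems unfolding N_def by blast
qed

end


definition Mw :: "nat \<Rightarrow> nat \<Rightarrow> nat \<Rightarrow> nat \<Rightarrow> gen list" where
  "Mw i a b c = replicate a (T i) @ replicate b (T (Suc i)) @ replicate c (T (Suc (Suc i)))"

lemma Mw_tw: "1 \<le> i \<Longrightarrow> tw (Mw i a b c)" by (simp add: Mw_def)
lemma Mw_valid: "1 \<le> i \<Longrightarrow> valid_word (Mw i a b c)" by (simp add: Mw_def)
lemma Mw_words: "1 \<le> i \<Longrightarrow> Suc (Suc i) \<le> n \<Longrightarrow> Mw i a b c \<in> words n" by (simp add: Mw_def)
lemma Mw_cG: "cG N (Mw i a b c) = 0" by (simp add: Mw_def)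

lemma sum3_shift: assumes per: "\<And>a b c. f a b c = f (a mod d) (b mod d) (c mod d)"
  shows "(\<Sum>a<d. \<Sum>b<d. \<Sum>c<d. f (a + k1) (b + k2) (c + (k3::nat))) = (\<Sum>a<(d::nat). \<Sum>b<d. \<Sum>c<d. f a b c)"
proof -
  have "(\<Sum>a<d. \<Sum>b<d. \<Sum>c<d. f (a + k1) (b + k2) (c + k3))
      = (\<Sum>a<d. \<Sum>b<d. \<Sum>c<d. f ((a + k1) mod d) ((b + k2) mod d) ((c + k3) mod d))"
    by (intro sum.cong refl per)
  also have "\<dots> = (\<Sum>a<d. \<Sum>b<d. \<Sum>c<d. f ((a + k1) mod d) ((b + k2) mod d) c)"
    by (intro sum.cong refl sum_shift_mod)
  also have "\<dots> = (\<Sum>a<d. \<Sum>b<d. \<Sum>c<d. f ((a + k1) mod d) b c)"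
    by (intro sum.cong refl sum_shift_mod[of "\<lambda>b. \<Sum>c<d. f ((_ + k1) mod d) b c"])
  also have "\<dots> = (\<Sum>a<d. \<Sum>b<d. \<Sum>c<d. f a b c)"
    by (rule sum_shift_mod[of "\<lambda>a. \<Sum>b<d. \<Sum>c<d. f a b c"])
  finally show ?thesis .
qed

context MT begin

definition Phi :: "nat \<Rightarrow> gen list \<Rightarrow> gen list \<Rightarrow> gen list \<Rightarrow> complex" where
  "Phi i p y q = (\<Sum>a<d. \<Sum>b<d. \<Sum>c<d. tr (p @ Mw i a b c @ y @ q))"

definition Psi :: "nat \<Rightarrow> gen list \<Rightarrow> gen list \<Rightarrow> complex" where
  "Psi i p q = Phi i p [] q + Phi i p [G i] q + Phi i p [G (Suc i)] q + Phi i p [G i, G (Suc i)] q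
     + Phi i p [G (Suc i), G i] q + Phi i p [G i, G (Suc i), G i] q"

lemma Mw_norm: "1 \<le> i \<Longrightarrow> a mod d = a' mod d \<Longrightarrow> b mod d = b' mod d \<Longrightarrow> c mod d = c' mod d \<Longrightarrow>
  weq (Mw i a b c) (Mw i a' b' c')"
  by (rule tw_norm) (auto simp: Mw_def)

lemma Mw_tr_mod: "1 \<le> i \<Longrightarrow> valid_word p \<Longrightarrow> valid_word r \<Longrightarrow>
   tr (p @ Mw i a b c @ r) = tr (p @ Mw i (a mod d) (b mod d) (c mod d) @ r)"
  by (rule weq_tr[OF Mw_norm]) auto

lemma Phi_shift: assumes "1 \<le> i" "valid_word p" "valid_word y" "valid_word q"
  shows "(\<Sum>a<d. \<Sum>b<d. \<Sum>c<d. tr (p @ Mw i (a + k1) (b + k2) (c + k3) @ y @ q)) = Phi i p y q"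
  unfolding Phi_def
  by (rule sum3_shift[where f="\<lambda>a b c. tr (p @ Mw i a b c @ y @ q)"], rule Mw_tr_mod) (use assms in auto)


lemma Phi_weq: "weq y y' \<Longrightarrow> 1 \<le> i \<Longrightarrow> valid_word p \<Longrightarrow> valid_word q \<Longrightarrow> Phi i p y q = Phi i p y' q"
  unfolding Phi_def by (intro sum.cong refl) (metis weq_tr weq_ctxL Mw_valid valid_append append.assoc)

lemma sum4_swap: "(\<Sum>a<d. \<Sum>b<d. \<Sum>c<d. \<Sum>s<(e::nat). g a b c s) = (\<Sum>s<e. \<Sum>a<(d::nat). \<Sum>b<d. \<Sum>c<d. g a b c s)"
proof -
  have "(\<Sum>a<d. \<Sum>b<d. \<Sum>c<d. \<Sum>s<e. g a b c s) = (\<Sum>a<d. \<Sum>b<d. \<Sum>s<e. \<Sum>c<d. g a b c s)"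
    by (rule sum.cong[OF refl], rule sum.cong[OF refl], rule sum.swap)
  also have "\<dots> = (\<Sum>a<d. \<Sum>s<e. \<Sum>b<d. \<Sum>c<d. g a b c s)"
    by (rule sum.cong[OF refl], rule sum.swap)
  also have "\<dots> = (\<Sum>s<e. \<Sum>a<d. \<Sum>b<d. \<Sum>c<d. g a b c s)"
    by (rule sum.swap)
  finally show ?thesis .
qed

lemma Phi_T: assumes "1 \<le> i" "j = i \<or> j = Suc i \<or> j = Suc (Suc i)" "valid_word p" "valid_word y" "valid_word q"
  shows "Phi i (p @ [T j]) y q = Phi i p y q"
proof -
  define k1 where "k1 = (if j = i then 1 else 0::nat)"
  define k2 where "k2 = (if j = Suc i then 1 else 0::nat)"
  define k3 where "k3 = (if j = Suc (Suc i) then 1 else 0::nat)"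
  have gm: "weq (T j # Mw i a b c) (Mw i (a + k1) (b + k2) (c + k3))" for a b c
    by (rule tw_norm) (use assms in \<open>auto simp: Mw_def k1_def k2_def k3_def\<close>)
  have "tr (p @ T j # Mw i a b c @ y @ q) = tr (p @ Mw i (a + k1) (b + k2) (c + k3) @ y @ q)" for a b c
    using weq_tr[OF gm[of a b c], of p "y @ q"] assms by simp
  then have "Phi i (p @ [T j]) y q = (\<Sum>a<d. \<Sum>b<d. \<Sum>c<d. tr (p @ Mw i (a + k1) (b + k2) (c + k3) @ y @ q))"
    unfolding Phi_def by simp
  also have "\<dots> = Phi i p y q" by (rule Phi_shift) (use assms in auto)
  finally show ?thesis .
qed

lemma Phi_G1: assumes "1 \<le> i" "valid_word p" "valid_word y" "valid_word q"
  shows "Phi i (p @ [G i]) y q = Phi i p (G i # y) q"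
proof -
  have gm: "weq (G i # Mw i a b c) (Mw i b a c @ [G i])" for a b c
  proof -
    have "weq (G i # Mw i a b c) (map (tsw i) (Mw i a b c) @ [G i])"
      by (rule gtw) (use assms Mw_tw in auto)
    also have "weq (map (tsw i) (Mw i a b c) @ [G i]) (Mw i b a c @ [G i])"
      by (rule weq_ctxR, rule tw_norm) (use assms in \<open>auto simp: Mw_def sw_def\<close>)
    finally show ?thesis .
  qed
  have "tr (p @ G i # Mw i a b c @ y @ q) = tr (p @ Mw i b a c @ G i # y @ q)" for a b c
    using weq_tr[OF gm[of a b c], of p "y @ q"] assms by simp
  then have "Phi i (p @ [G i]) y q = (\<Sum>a<d. \<Sum>b<d. \<Sum>c<d. tr (p @ Mw i b a c @ G i # y @ q))"
    unfolding Phi_def by simp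
  also have "\<dots> = (\<Sum>b<d. \<Sum>a<d. \<Sum>c<d. tr (p @ Mw i b a c @ G i # y @ q))" by (rule sum.swap)
  also have "\<dots> = Phi i p (G i # y) q" unfolding Phi_def by simp
  finally show ?thesis .
qed

lemma Phi_G2: assumes "1 \<le> i" "valid_word p" "valid_word y" "valid_word q"
  shows "Phi i (p @ [G (Suc i)]) y q = Phi i p (G (Suc i) # y) q"
proof -
  have gm: "weq (G (Suc i) # Mw i a b c) (Mw i a c b @ [G (Suc i)])" for a b c
  proof -
    have "weq (G (Suc i) # Mw i a b c) (map (tsw (Suc i)) (Mw i a b c) @ [G (Suc i)])"
      by (rule gtw) (use assms Mw_tw in auto)
    also have "weq (map (tsw (Suc i)) (Mw i a b c) @ [G (Suc i)]) (Mw i a c b @ [G (Suc i)])"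
      by (rule weq_ctxR, rule tw_norm) (use assms in \<open>auto simp: Mw_def sw_def\<close>)
    finally show ?thesis .
  qed
  have "tr (p @ G (Suc i) # Mw i a b c @ y @ q) = tr (p @ Mw i a c b @ G (Suc i) # y @ q)" for a b c
    using weq_tr[OF gm[of a b c], of p "y @ q"] assms by simp
  then have "Phi i (p @ [G (Suc i)]) y q = (\<Sum>a<d. \<Sum>b<d. \<Sum>c<d. tr (p @ Mw i a c b @ G (Suc i) # y @ q))"
    unfolding Phi_def by simp
  also have "\<dots> = (\<Sum>a<d. \<Sum>c<d. \<Sum>b<d. tr (p @ Mw i a c b @ G (Suc i) # y @ q))" by (rule sum.cong[OF refl], rule sum.swap)
  also have "\<dots> = Phi i p (G (Suc i) # y) q" unfolding Phi_def by simp
  finally show ?thesis .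
qed

lemma Phi_quad: assumes "1 \<le> i" "j = i \<or> j = Suc i" "valid_word p" "valid_word y" "valid_word q"
  shows "Phi i p (G j # G j # y) q = u * Phi i p y q + (u - 1) * Phi i p (G j # y) q"
proof -
  define k1 where "k1 = (\<lambda>s. if j = i then s else 0::nat)"
  define k2 where "k2 = (\<lambda>s. if j = i then d - s else s)"
  define k3 where "k3 = (\<lambda>s. if j = i then 0 else d - s)"
  have j1: "1 \<le> j" using assms by auto
  have ew: "weq (Mw i a b c @ Ew d j s) (Mw i (a + k1 s) (b + k2 s) (c + k3 s))" for a b c s
    by (rule tw_norm) (use assms in \<open>auto simp: Mw_def Ew_def k1_def k2_def k3_def\<close>)
  have ew2: "tr (p @ Mw i a b c @ Ew d j s @ r) = tr (p @ Mw i (a + k1 s) (b + k2 s) (c + k3 s) @ r)"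
    if "valid_word r" for a b c s r
    using weq_tr[OF ew[of a b c s], of p r] assms that by simp
  have q1: "tr (p @ Mw i a b c @ G j # G j # y @ q) = tr (p @ Mw i a b c @ y @ q)
     + (u - 1) * (1 / of_nat d * (\<Sum>s<d. tr (p @ Mw i (a + k1 s) (b + k2 s) (c + k3 s) @ y @ q)))
     + (u - 1) * (1 / of_nat d * (\<Sum>s<d. tr (p @ Mw i (a + k1 s) (b + k2 s) (c + k3 s) @ G j # y @ q)))" for a b c
    using quad[OF j1, of "p @ Mw i a b c" "y @ q"] ew2[of "y @ q"] ew2[of "G j # y @ q"] assms j1 Mw_valid
    by simp
  have sh: "(\<Sum>s<d. \<Sum>a<d. \<Sum>b<d. \<Sum>c<d. tr (p @ Mw i (a + k1 s) (b + k2 s) (c + k3 s) @ r @ q)) = of_nat d * Phi i p r q"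
    if "valid_word r" for r
  proof -
    have "(\<Sum>s<d. \<Sum>a<d. \<Sum>b<d. \<Sum>c<d. tr (p @ Mw i (a + k1 s) (b + k2 s) (c + k3 s) @ r @ q)) = (\<Sum>s<d. Phi i p r q)"
      by (rule sum.cong[OF refl], rule Phi_shift) (use assms that in auto)
    then show ?thesis by simp
  qed
  have "Phi i p (G j # G j # y) q = Phi i p y q
     + (u - 1) * (1 / of_nat d * (\<Sum>a<d. \<Sum>b<d. \<Sum>c<d. \<Sum>s<d. tr (p @ Mw i (a + k1 s) (b + k2 s) (c + k3 s) @ y @ q)))
     + (u - 1) * (1 / of_nat d * (\<Sum>a<d. \<Sum>b<d. \<Sum>c<d. \<Sum>s<d. tr (p @ Mw i (a + k1 s) (b + k2 s) (c + k3 s) @ (G j # y) @ q)))"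
    unfolding Phi_def by (simp only: q1 sum.distrib sum_distrib_left append_Cons)
  also have "\<dots> = Phi i p y q + (u - 1) * Phi i p y q + (u - 1) * Phi i p (G j # y) q"
  proof -
    have dn: "of_nat d \<noteq> (0::complex)" using d1 by simp
    have s1: "(\<Sum>a<d. \<Sum>b<d. \<Sum>c<d. \<Sum>s<d. tr (p @ Mw i (a + k1 s) (b + k2 s) (c + k3 s) @ y @ q))
       = of_nat d * Phi i p y q"
      using sum4_swap[of "\<lambda>a b c s. tr (p @ Mw i (a + k1 s) (b + k2 s) (c + k3 s) @ y @ q)" d] sh[of y] assms by simp
    have s2: "(\<Sum>a<d. \<Sum>b<d. \<Sum>c<d. \<Sum>s<d. tr (p @ Mw i (a + k1 s) (b + k2 s) (c + k3 s) @ (G j # y) @ q))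
       = of_nat d * Phi i p (G j # y) q"
      using sum4_swap[of "\<lambda>a b c s. tr (p @ Mw i (a + k1 s) (b + k2 s) (c + k3 s) @ (G j # y) @ q)" d] sh[of "G j # y"] assms j1
      by (simp del: append_Cons)
    show ?thesis unfolding s1 s2 using dn by simp
  qed
  finally show ?thesis by (simp add: algebra_simps)
qed


lemma Psi_T: assumes "1 \<le> i" "j = i \<or> j = Suc i \<or> j = Suc (Suc i)" "valid_word p" "valid_word q"
  shows "Psi i (p @ [T j]) q = Psi i p q"
  unfolding Psi_def using Phi_T[OF assms(1,2,3) _ assms(4)] assms(1) by simp

lemma Psi_G1: assumes "1 \<le> i" "valid_word p" "valid_word q"
  shows "Psi i (p @ [G i]) q = u * Psi i p q"
proof -
  have e: "Phi i (p @ [G i]) y q = Phi i p (G i # y) q" if "valid_word y" for y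
    using Phi_G1 assms that by blast
  have qd: "Phi i p (G i # G i # y) q = u * Phi i p y q + (u - 1) * Phi i p (G i # y) q" if "valid_word y" for y
    using Phi_quad assms that by blast
  show ?thesis unfolding Psi_def using e qd assms(1) by (simp add: algebra_simps)
qed

lemma Psi_G2: assumes "1 \<le> i" "valid_word p" "valid_word q"
  shows "Psi i (p @ [G (Suc i)]) q = u * Psi i p q"
proof -
  have e: "Phi i (p @ [G (Suc i)]) y q = Phi i p (G (Suc i) # y) q" if "valid_word y" for y
    using Phi_G2 assms that by blast
  have qd: "Phi i p (G (Suc i) # G (Suc i) # y) q = u * Phi i p y q + (u - 1) * Phi i p (G (Suc i) # y) q" if "valid_word y" for y
    using Phi_quad assms that by blast
  have b1: "Phi i p [G (Suc i), G i, G (Suc i)] q = Phi i p [G i, G (Suc i), G i] q"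
    by (rule Phi_weq[OF R2]) (use assms in auto)
  have b2: "Phi i p [G (Suc i), G i, G (Suc i), G i] q = Phi i p [G (Suc i), G (Suc i), G i, G (Suc i)] q"
    by (rule Phi_weq[OF weq_Cons[OF weq_sym[OF R2]]]) (use assms in auto)
  have h1: "Phi i p [G (Suc i), G (Suc i)] q = u * Phi i p [] q + (u - 1) * Phi i p [G (Suc i)] q"
    using qd[of "[]"] by simp
  have h2: "Phi i p [G (Suc i), G (Suc i), G i] q = u * Phi i p [G i] q + (u - 1) * Phi i p [G (Suc i), G i] q"
    using qd[of "[G i]"] assms by simp
  have h3: "Phi i p [G (Suc i), G (Suc i), G i, G (Suc i)] q = u * Phi i p [G i, G (Suc i)] q + (u - 1) * Phi i p [G (Suc i), G i, G (Suc i)] q"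
    using qd[of "[G i, G (Suc i)]"] assms by simp
  have ee: "Phi i (p @ [G (Suc i)]) [] q = Phi i p [G (Suc i)] q"
    "Phi i (p @ [G (Suc i)]) [G i] q = Phi i p [G (Suc i), G i] q"
    "Phi i (p @ [G (Suc i)]) [G (Suc i)] q = Phi i p [G (Suc i), G (Suc i)] q"
    "Phi i (p @ [G (Suc i)]) [G i, G (Suc i)] q = Phi i p [G (Suc i), G i, G (Suc i)] q"
    "Phi i (p @ [G (Suc i)]) [G (Suc i), G i] q = Phi i p [G (Suc i), G (Suc i), G i] q"
    "Phi i (p @ [G (Suc i)]) [G i, G (Suc i), G i] q = Phi i p [G (Suc i), G i, G (Suc i), G i] q"
    using e assms by auto
  show ?thesis unfolding Psi_def ee b2 h3 h2 h1 b1 by (simp add: algebra_simps)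
qed

lemma Z3: assumes "Psi 1 [] [] = 0" shows "w \<in> words 3 \<Longrightarrow> Psi 1 w [] = 0"
proof (induct w rule: rev_induct)
  case Nil then show ?case using assms by simp
next
  case (snoc g w)
  have w: "w \<in> words 3" "valid_word w" using snoc(2) words_valid by auto
  have g: "[g] \<in> words 3" using snoc(2) by auto
  show ?case
  proof (cases g)
    case (G j)
    then have "j = 1 \<or> j = 2" using g by auto
    then show ?thesis using Psi_G1[of 1 w "[]"] Psi_G2[of 1 w "[]"] snoc(1) w G by (auto simp: numeral_2_eq_2)
  next
    case (T j)
    then have "j = 1 \<or> j = Suc 1 \<or> j = Suc (Suc 1)" using g by auto
    then show ?thesis using Psi_T[of 1 j w "[]"] snoc(1) w T by auto
  qed
qed

lemma ftr_add: "ftr (\<lambda>v. f v + g v) Q = ftr f Q + ftr g Q"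
  by (induct Q) (auto simp: algebra_simps)
lemma ftr_sum: "ftr (\<lambda>v. \<Sum>a\<in>A. f a v) Q = (\<Sum>a\<in>A. ftr (f a) Q)"
  by (induct Q) (auto simp: algebra_simps sum.distrib sum_distrib_left)
lemma ftr_zero: "(\<forall>p\<in>set Q. f (snd p) = 0) \<Longrightarrow> ftr f Q = 0"
  by (induct Q) auto

lemma Phi_rep: assumes "rep w Q" "1 \<le> i" "valid_word y" "valid_word q"
  shows "Phi i w y q = ftr (\<lambda>v. Phi i v y q) Q"
proof -
  have h: "\<forall>a b. valid_word a \<longrightarrow> valid_word b \<longrightarrow> tr (a @ w @ b) = ftr (\<lambda>v. tr (a @ v @ b)) Q"
    using assms(1) by (simp add: rep_def)
  have "tr (w @ Mw i a b c @ y @ q) = ftr (\<lambda>v. tr (v @ Mw i a b c @ y @ q)) Q" for a b c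
  proof -
    have "valid_word (Mw i a b c @ y @ q)" using Mw_valid[OF assms(2)] assms(3,4) by simp
    then have "tr ([] @ w @ (Mw i a b c @ y @ q)) = ftr (\<lambda>v. tr ([] @ v @ (Mw i a b c @ y @ q))) Q"
      using h valid_Nil by blast
    then show ?thesis by simp
  qed
  then show ?thesis unfolding Phi_def ftr_sum by simp
qed

lemma Psi_rep: "rep w Q \<Longrightarrow> 1 \<le> i \<Longrightarrow> valid_word q \<Longrightarrow> Psi i w q = ftr (\<lambda>v. Psi i v q) Q"
  unfolding Psi_def ftr_add using Phi_rep by simp

lemma Psi_cong1: assumes "\<And>R. R \<in> words 3 \<Longrightarrow> tr (v @ R) = k * tr (v' @ R)"
  shows "Psi 1 v [] = k * Psi 1 v' []"
proof -
  have P: "Phi 1 v y [] = k * Phi 1 v' y []" if "y \<in> words 3" for y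
    unfolding Phi_def sum_distrib_left
    by (intro sum.cong refl) (use assms that Mw_words[of 1 3] in \<open>simp add: numeral_3_eq_3\<close>)
  show ?thesis unfolding Psi_def using P by (simp add: algebra_simps numeral_3_eq_3)
qed


lemma Zstep: assumes n3: "3 \<le> n" and IH: "\<forall>w\<in>words n. Psi 1 w [] = 0" and w: "w \<in> words (Suc n)"
  shows "Psi 1 w [] = 0"
proof -
  have n1: "1 \<le> n" using n3 by simp
  have R3n: "R \<in> words n" if "R \<in> words 3" for R using words_mono[OF that n3] .
  obtain Q where Q: "allw (\<lambda>v. v \<in> words (Suc n) \<and> cG n v \<le> 1) Q" "rep w Q"
    using span[OF w] unfolding spanP_def by blast
  have each: "Psi 1 v [] = 0" if v: "v \<in> words (Suc n)" "cG n v \<le> 1" for v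
  proof (cases "cG n v = 0")
    case True
    have nG: "G n \<notin> set v" using True cG_0 by blast
    define v' where "v' = filter (\<lambda>g. g \<noteq> T (Suc n)) v"
    define k where "k = length (filter (\<lambda>g. g = T (Suc n)) v)"
    have e: "weq v (v' @ replicate k (T (Suc n)))" using sepT[OF v(1) nG] unfolding v'_def k_def .
    have v'w: "v' \<in> words n" using sepT_words[OF v(1) nG] unfolding v'_def .
    have "tr (v @ R) = x (k mod d) * tr (v' @ R)" if R: "R \<in> words 3" for R
    proof -
      have Rv: "valid_word R" using R words_valid by blast
      have "tr (v @ R) = tr (v' @ replicate k (T (Suc n)) @ R)"
        using weq_tr[OF e, of "[]" R] Rv by simp
      also have "\<dots> = tr (v' @ R @ replicate k (T (Suc n)))"
        using weq_tr[OF trep_words[OF R3n[OF R], of "Suc n" k], of v' "[]"] v'w words_valid by simp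
      also have "\<dots> = x (k mod d) * tr (v' @ R)"
        using mTk[of "v' @ R" n k] v'w R3n[OF R] by simp
      finally show ?thesis .
    qed
    then have "Psi 1 v [] = x (k mod d) * Psi 1 v' []" by (rule Psi_cong1)
    then show ?thesis using IH v'w by simp
  next
    case False
    then have c1: "cG n v = 1" using v by simp
    then have "G n \<in> set v" using cG_0 by force
    then obtain \<alpha> \<gamma> where vs: "v = \<alpha> @ G n # \<gamma>" and n\<alpha>: "G n \<notin> set \<alpha>" by (metis split_list_first)
    have n\<gamma>: "G n \<notin> set \<gamma>" using c1 vs n\<alpha> cG_0 by force
    have ws: "\<alpha> \<in> words (Suc n)" "\<gamma> \<in> words (Suc n)" using v vs by auto
    define \<alpha>' where "\<alpha>' = filter (\<lambda>g. g \<noteq> T (Suc n)) \<alpha>"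
    define ka where "ka = length (filter (\<lambda>g. g = T (Suc n)) \<alpha>)"
    define \<gamma>' where "\<gamma>' = filter (\<lambda>g. g \<noteq> T (Suc n)) \<gamma>"
    define kg where "kg = length (filter (\<lambda>g. g = T (Suc n)) \<gamma>)"
    have e1: "weq \<alpha> (\<alpha>' @ replicate ka (T (Suc n)))" using sepT[OF ws(1) n\<alpha>] unfolding \<alpha>'_def ka_def .
    have e2: "weq \<gamma> (\<gamma>' @ replicate kg (T (Suc n)))" using sepT[OF ws(2) n\<gamma>] unfolding \<gamma>'_def kg_def .
    have w1: "\<alpha>' \<in> words n" using sepT_words[OF ws(1) n\<alpha>] unfolding \<alpha>'_def .
    have w2: "\<gamma>' \<in> words n" using sepT_words[OF ws(2) n\<gamma>] unfolding \<gamma>'_def .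
    have vv: "valid_word \<alpha>'" "valid_word \<gamma>'" "valid_word \<gamma>" using w1 w2 ws words_valid by blast+
    let ?W = "\<alpha>' @ replicate kg (T n) @ replicate ka (T n) @ \<gamma>'"
    have "tr (v @ R) = z * tr (?W @ R)" if R: "R \<in> words 3" for R
    proof -
      have Rn: "R \<in> words n" using R3n[OF R] .
      have Rv: "valid_word R" using R words_valid by blast
      have "tr (v @ R) = tr ((\<alpha>' @ replicate ka (T (Suc n))) @ G n # \<gamma> @ R)"
        using weq_tr[OF e1, of "[]" "G n # \<gamma> @ R"] vs Rv vv n1 by simp
      also have "\<dots> = tr ((\<alpha>' @ replicate ka (T (Suc n))) @ G n # (\<gamma>' @ replicate kg (T (Suc n))) @ R)"
        using weq_tr[OF e2, of "(\<alpha>' @ replicate ka (T (Suc n))) @ [G n]" R] Rv vv n1 by simp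
      also have "\<dots> = tr (\<alpha>' @ G n # replicate ka (T n) @ \<gamma>' @ replicate kg (T (Suc n)) @ R)"
        using weq_tr[OF tg_rep[of n "Suc n" ka], of \<alpha>' "\<gamma>' @ replicate kg (T (Suc n)) @ R"] Rv vv n1 by simp
      also have "\<dots> = tr (\<alpha>' @ G n # replicate ka (T n) @ \<gamma>' @ R @ replicate kg (T (Suc n)))"
        using weq_tr[OF trep_words[OF Rn, of "Suc n" kg], of "\<alpha>' @ G n # replicate ka (T n) @ \<gamma>'" "[]"] Rv vv n1 by simp
      also have "\<dots> = tr (replicate kg (T (Suc n)) @ \<alpha>' @ G n # replicate ka (T n) @ \<gamma>' @ R)"
        using trc[of "\<alpha>' @ G n # replicate ka (T n) @ \<gamma>' @ R" "replicate kg (T (Suc n))"] Rv vv n1 by simp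
      also have "\<dots> = tr (\<alpha>' @ replicate kg (T (Suc n)) @ G n # replicate ka (T n) @ \<gamma>' @ R)"
        using weq_tr[OF trep_words[OF w1, of "Suc n" kg], of "[]" "G n # replicate ka (T n) @ \<gamma>' @ R"] Rv vv n1 by simp
      also have "\<dots> = tr (\<alpha>' @ G n # replicate kg (T n) @ replicate ka (T n) @ \<gamma>' @ R)"
        using weq_tr[OF tg_rep[of n "Suc n" kg], of \<alpha>' "replicate ka (T n) @ \<gamma>' @ R"] Rv vv n1 by simp
      also have "\<dots> = tr ((replicate kg (T n) @ replicate ka (T n) @ \<gamma>' @ R @ \<alpha>') @ [G n])"
        using trc[of "\<alpha>' @ [G n]" "replicate kg (T n) @ replicate ka (T n) @ \<gamma>' @ R"] Rv vv n1 by simp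
      also have "\<dots> = z * tr (replicate kg (T n) @ replicate ka (T n) @ \<gamma>' @ R @ \<alpha>')"
        by (rule mG) (use n1 w1 w2 Rn in auto)
      also have "\<dots> = z * tr (?W @ R)"
        using trc[of "\<alpha>'" "replicate kg (T n) @ replicate ka (T n) @ \<gamma>' @ R"] Rv vv n1 by simp
      finally show ?thesis .
    qed
    then have "Psi 1 v [] = z * Psi 1 ?W []" by (rule Psi_cong1)
    moreover have "?W \<in> words n" using w1 w2 n1 by simp
    ultimately show ?thesis using IH by simp
  qed
  have "Psi 1 w [] = ftr (\<lambda>v. Psi 1 v []) Q" by (rule Psi_rep[OF Q(2)]) auto
  also have "\<dots> = 0" by (rule ftr_zero) (use Q(1) each in \<open>auto simp: allw_def\<close>)
  finally show ?thesis .
qed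

lemma Zall: assumes "Psi 1 [] [] = 0" "3 \<le> n" shows "\<forall>w\<in>words n. Psi 1 w [] = 0"
  using assms(2)
proof (induct n rule: nat_induct_at_least)
  case base then show ?case using Z3[OF assms(1)] by blast
next
  case (Suc n) then show ?case using Zstep by blast
qed

end


definition INV :: "nat \<Rightarrow> complex \<Rightarrow> nat \<Rightarrow> (complex \<times> gen list) list" where
  "INV d u j = [(1, [G j])] @ map (\<lambda>s. ((1 / u - 1) / of_nat d, Ew d j s)) [0..<d]
     @ map (\<lambda>s. ((1 / u - 1) / of_nat d, Ew d j s @ [G j])) [0..<d]"

lemma ftr_INV: "ftr f (INV d u j) = f [G j] + (1 / u - 1) / of_nat d * (\<Sum>s<d. f (Ew d j s))
   + (1 / u - 1) / of_nat d * (\<Sum>s<d. f (Ew d j s @ [G j]))"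
  by (simp add: INV_def ftr_map sum_list_upt0 sum_distrib_left)

lemma INV_words: "1 \<le> j \<Longrightarrow> Suc j \<le> n \<Longrightarrow> p \<in> set (INV d u j) \<Longrightarrow> snd p \<in> words n"
  by (auto simp: INV_def Ew_def)

lemma mod_lem: assumes "s < d" "t < (d::nat)"
  shows "((d - s) + (d - t)) mod d = (d - (s + t) mod d) mod d"
proof (cases "s + t < d")
  case True
  have e: "(d - s) + (d - t) = d + (d - (s + t))" using assms True by simp
  have h: "(s + t) mod d = s + t" using True by simp
  show ?thesis unfolding e h mod_add_self1 by (rule refl)
next
  case False
  then have "(s + t) mod d = s + t - d" using assms by (simp add: mod_if le_mod_geq)
  then show ?thesis using False assms by (simp add: mod_if)
qed

context MT begin

lemma Ew_swap: assumes "1 \<le> j" "s < d"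
  shows "weq (G j # Ew d j s) (Ew d j ((d - s) mod d) @ [G j])"
proof -
  have "weq (G j # Ew d j s) (map (tsw j) (Ew d j s) @ [G j])"
    by (rule gtw) (use assms in \<open>auto simp: Ew_def\<close>)
  also have "weq (map (tsw j) (Ew d j s) @ [G j]) (Ew d j ((d - s) mod d) @ [G j])"
  proof (rule weq_ctxR, rule tw_norm)
    show "\<forall>i. count (mset (map (tsw j) (Ew d j s))) (T i) mod d = count (mset (Ew d j ((d - s) mod d))) (T i) mod d"
    proof
      fix i show "count (mset (map (tsw j) (Ew d j s))) (T i) mod d = count (mset (Ew d j ((d - s) mod d))) (T i) mod d"
        using assms by (cases "s = 0") (auto simp: Ew_def)
    qed
  qed (use assms in \<open>auto simp: Ew_def\<close>)
  finally show ?thesis .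
qed

lemma Ew_mult: assumes "1 \<le> j" "s < d" "t < d"
  shows "weq (Ew d j s @ Ew d j t) (Ew d j ((s + t) mod d))"
proof (rule tw_norm)
  show "\<forall>i. count (mset (Ew d j s @ Ew d j t)) (T i) mod d = count (mset (Ew d j ((s + t) mod d))) (T i) mod d"
  proof
    fix i show "count (mset (Ew d j s @ Ew d j t)) (T i) mod d = count (mset (Ew d j ((s + t) mod d))) (T i) mod d"
      using assms mod_lem[OF assms(2,3)] by (auto simp: Ew_def)
  qed
qed (use assms in \<open>auto simp: Ew_def\<close>)


lemma inv1: assumes j: "1 \<le> j" and l: "valid_word l" and r: "valid_word r"
  shows "ftr (\<lambda>y. tr (l @ G j # y @ r)) (INV d u j) = tr (l @ r)"
proof -
  define E where "E r' = (\<Sum>s<d. tr (l @ Ew d j s @ r'))" for r'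
  have dn: "of_nat d \<noteq> (0::complex)" using d1 by simp
  have ewv: "valid_word (Ew d j s)" for s using Ew_valid[OF j] .
  have A: "tr (l @ G j # G j # r) = tr (l @ r) + (u - 1) * (1 / of_nat d * E r) + (u - 1) * (1 / of_nat d * E (G j # r))"
    using quad[OF j l r] unfolding E_def .
  have sw1: "tr (l @ G j # Ew d j s @ r') = tr (l @ Ew d j ((d - s) mod d) @ G j # r')"
    if "s < d" "valid_word r'" for s r'
    using weq_tr[OF Ew_swap[OF j that(1)], of l r'] l that by simp
  have B: "(\<Sum>s<d. tr (l @ G j # Ew d j s @ r')) = E (G j # r')" if "valid_word r'" for r'
  proof -
    have "(\<Sum>s<d. tr (l @ G j # Ew d j s @ r')) = (\<Sum>s<d. tr (l @ Ew d j ((d - s) mod d) @ G j # r'))"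
      by (rule sum.cong[OF refl]) (use sw1 that in auto)
    also have "\<dots> = (\<Sum>s<d. tr (l @ Ew d j s @ G j # r'))"
      by (rule sum_reflect[where f="\<lambda>s. tr (l @ Ew d j s @ G j # r')"])
    finally show ?thesis by (simp add: E_def)
  qed
  have C2: "(\<Sum>s<d. \<Sum>t<d. tr (l @ Ew d j s @ Ew d j t @ r')) = of_nat d * E r'" if rv: "valid_word r'" for r'
  proof -
    have "(\<Sum>s<d. \<Sum>t<d. tr (l @ Ew d j s @ Ew d j t @ r')) = (\<Sum>s<d. \<Sum>t<d. tr (l @ Ew d j ((s + t) mod d) @ r'))"
    proof (intro sum.cong refl)
      fix s t assume "s \<in> {..<d}" "t \<in> {..<d}"
      then show "tr (l @ Ew d j s @ Ew d j t @ r') = tr (l @ Ew d j ((s + t) mod d) @ r')"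
        using weq_tr[OF Ew_mult[OF j, of s t], of l r'] l rv by simp
    qed
    also have "\<dots> = (\<Sum>s<d. E r')"
      by (rule sum.cong[OF refl]) (unfold E_def, rule sum_shift_mod')
    finally show ?thesis by simp
  qed
  have C: "(\<Sum>s<d. tr (l @ G j # Ew d j s @ G j # r)) = u * E r + (u - 1) * E (G j # r)"
  proof -
    have "(\<Sum>s<d. tr (l @ G j # Ew d j s @ G j # r)) = (\<Sum>s<d. tr (l @ Ew d j s @ G j # G j # r))"
      using B[of "G j # r"] r j unfolding E_def by simp
    also have "\<dots> = (\<Sum>s<d. tr (l @ Ew d j s @ r) + (u - 1) * (1 / of_nat d * (\<Sum>t<d. tr (l @ Ew d j s @ Ew d j t @ r)))
        + (u - 1) * (1 / of_nat d * (\<Sum>t<d. tr (l @ Ew d j s @ Ew d j t @ G j # r))))"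
    proof (rule sum.cong[OF refl])
      fix s show "tr (l @ Ew d j s @ G j # G j # r) = tr (l @ Ew d j s @ r) + (u - 1) * (1 / of_nat d * (\<Sum>t<d. tr (l @ Ew d j s @ Ew d j t @ r)))
        + (u - 1) * (1 / of_nat d * (\<Sum>t<d. tr (l @ Ew d j s @ Ew d j t @ G j # r)))"
        using quad[OF j, of "l @ Ew d j s" r] l r ewv by simp
    qed
    also have "\<dots> = E r + (u - 1) * (1 / of_nat d * (\<Sum>s<d. \<Sum>t<d. tr (l @ Ew d j s @ Ew d j t @ r)))
        + (u - 1) * (1 / of_nat d * (\<Sum>s<d. \<Sum>t<d. tr (l @ Ew d j s @ Ew d j t @ G j # r)))"
      unfolding E_def by (simp add: sum.distrib sum_distrib_left)
    also have "\<dots> = E r + (u - 1) * E r + (u - 1) * E (G j # r)"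
      using C2[OF r] C2[of "G j # r"] r j dn by simp
    finally show ?thesis by (simp add: algebra_simps)
  qed
  have "ftr (\<lambda>y. tr (l @ G j # y @ r)) (INV d u j) = tr (l @ G j # G j # r)
      + (1 / u - 1) / of_nat d * E (G j # r) + (1 / u - 1) / of_nat d * (u * E r + (u - 1) * E (G j # r))"
    unfolding ftr_INV using B[OF r] C by simp
  also have "\<dots> = tr (l @ r)" unfolding A using u0 dn by (simp add: field_simps)
  finally show ?thesis .
qed


lemma Phi_ins: assumes "1 \<le> j" "1 \<le> k" "valid_word p" "valid_word y" "valid_word s" "valid_word r"
  shows "Phi k p y (s @ r) = ftr (\<lambda>w. Phi k p y (s @ G j # w @ r)) (INV d u j)"
proof -
  have "tr (p @ Mw k a b c @ y @ s @ r) = ftr (\<lambda>w. tr (p @ Mw k a b c @ y @ s @ G j # w @ r)) (INV d u j)" for a b c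
    using inv1[OF assms(1), of "p @ Mw k a b c @ y @ s" r] assms Mw_valid[OF assms(2)] by simp
  then show ?thesis unfolding Phi_def ftr_sum by simp
qed

lemma Psi_ins: assumes "1 \<le> j" "1 \<le> k" "valid_word p" "valid_word s" "valid_word r"
  shows "Psi k p (s @ r) = ftr (\<lambda>w. Psi k p (s @ G j # w @ r)) (INV d u j)"
  unfolding Psi_def ftr_add using Phi_ins[OF assms(1,2,3) _ assms(4,5)] assms(2) by simp

lemma Psi_trc: assumes "1 \<le> i" "valid_word p" "valid_word q" shows "Psi i p q = Psi i (q @ p) []"
proof -
  have "Phi i p y q = Phi i (q @ p) y []" if "valid_word y" for y
    unfolding Phi_def
    by (intro sum.cong refl) (use trc[of "p @ Mw i _ _ _ @ y" q] assms that Mw_valid in simp)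
  then show ?thesis unfolding Psi_def using assms by simp
qed

definition Xw :: "nat \<Rightarrow> gen list" where "Xw i = [G i, G (Suc i), G (Suc (Suc i))]"

lemma X_M: assumes "1 \<le> i" shows "weq (Xw i @ Mw i a b c) (Mw (Suc i) a b c @ Xw i)"
proof -
  let ?M1 = "replicate a (T i) @ replicate b (T (Suc i)) @ replicate c (T (Suc (Suc (Suc i))))"
  let ?M2 = "replicate a (T i) @ replicate b (T (Suc (Suc i))) @ replicate c (T (Suc (Suc (Suc i))))"
  have e3: "weq (G (Suc (Suc i)) # Mw i a b c) (?M1 @ [G (Suc (Suc i))])"
    using gtw[of "Mw i a b c" "Suc (Suc i)"] assms by (simp add: Mw_def sw_def)
  have e2: "weq (G (Suc i) # ?M1) (?M2 @ [G (Suc i)])"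
    using gtw[of ?M1 "Suc i"] assms by (simp add: sw_def)
  have e1: "weq (G i # ?M2) (Mw (Suc i) a b c @ [G i])"
    using gtw[of ?M2 i] assms by (simp add: Mw_def sw_def)
  have "weq (Xw i @ Mw i a b c) ([G i, G (Suc i)] @ (G (Suc (Suc i)) # Mw i a b c))" by (simp add: Xw_def)
  also have "weq \<dots> ([G i, G (Suc i)] @ ?M1 @ [G (Suc (Suc i))])"
    by (rule weq_ctxL[OF e3]) (use assms in simp)
  also have "weq \<dots> ([G i] @ (G (Suc i) # ?M1) @ [G (Suc (Suc i))])" by simp
  also have "weq \<dots> ([G i] @ (?M2 @ [G (Suc i)]) @ [G (Suc (Suc i))])"
    by (rule weq_ctx[OF e2]) (use assms in simp_all)
  also have "weq \<dots> ((G i # ?M2) @ [G (Suc i), G (Suc (Suc i))])" by simp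
  also have "weq \<dots> ((Mw (Suc i) a b c @ [G i]) @ [G (Suc i), G (Suc (Suc i))])"
    by (rule weq_ctxR[OF e1]) (use assms in simp)
  also have "weq \<dots> (Mw (Suc i) a b c @ Xw i)" by (simp add: Xw_def)
  finally show ?thesis .
qed

lemma XL1: assumes "1 \<le> i" "valid_word r" shows "weq (Xw i @ G i # r) (G (Suc i) # Xw i @ r)"
proof -
  have "weq ([G i, G (Suc i)] @ [G (Suc (Suc i)), G i] @ r) ([G i, G (Suc i)] @ [G i, G (Suc (Suc i))] @ r)"
    by (rule weq_ctx[OF R1]) (use assms in auto)
  also have "weq ([G i, G (Suc i)] @ [G i, G (Suc (Suc i))] @ r) ([] @ [G (Suc i), G i, G (Suc i)] @ (G (Suc (Suc i)) # r))"
    using weq_ctx[OF weq_sym[OF R2[OF assms(1)]], of "[]" "G (Suc (Suc i)) # r"] assms by simp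
  finally show ?thesis by (simp add: Xw_def)
qed

lemma XL2: assumes "1 \<le> i" "valid_word r" shows "weq (Xw i @ G (Suc i) # r) (G (Suc (Suc i)) # Xw i @ r)"
proof -
  have "weq ([G i] @ [G (Suc i), G (Suc (Suc i)), G (Suc i)] @ r) ([G i] @ [G (Suc (Suc i)), G (Suc i), G (Suc (Suc i))] @ r)"
    by (rule weq_ctx[OF weq_sym[OF R2]]) (use assms in auto)
  also have "weq ([G i] @ [G (Suc (Suc i)), G (Suc i), G (Suc (Suc i))] @ r) ([] @ [G (Suc (Suc i)), G i] @ (G (Suc i) # G (Suc (Suc i)) # r))"
    using weq_ctx[OF R1[of i "Suc (Suc i)"], of "[]" "G (Suc i) # G (Suc (Suc i)) # r"] assms by simp
  finally show ?thesis by (simp add: Xw_def)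
qed

lemma X_sig: assumes "1 \<le> i" "valid_word r"
  shows "weq (Xw i @ [] @ r) ([] @ Xw i @ r)"
    "weq (Xw i @ [G i] @ r) ([G (Suc i)] @ Xw i @ r)"
    "weq (Xw i @ [G (Suc i)] @ r) ([G (Suc (Suc i))] @ Xw i @ r)"
    "weq (Xw i @ [G i, G (Suc i)] @ r) ([G (Suc i), G (Suc (Suc i))] @ Xw i @ r)"
    "weq (Xw i @ [G (Suc i), G i] @ r) ([G (Suc (Suc i)), G (Suc i)] @ Xw i @ r)"
    "weq (Xw i @ [G i, G (Suc i), G i] @ r) ([G (Suc i), G (Suc (Suc i)), G (Suc i)] @ Xw i @ r)"
proof -
  have v: "valid_word (G k # r)" if "1 \<le> k" for k using assms that by simp
  show "weq (Xw i @ [] @ r) ([] @ Xw i @ r)" by simp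
  show "weq (Xw i @ [G i] @ r) ([G (Suc i)] @ Xw i @ r)" using XL1 assms by simp
  show "weq (Xw i @ [G (Suc i)] @ r) ([G (Suc (Suc i))] @ Xw i @ r)" using XL2 assms by simp
  show "weq (Xw i @ [G i, G (Suc i)] @ r) ([G (Suc i), G (Suc (Suc i))] @ Xw i @ r)"
    using XL1[OF assms(1) v[of "Suc i"]] weq_Cons[OF XL2[OF assms], of "G (Suc i)"] weq_trans assms by simp
  show "weq (Xw i @ [G (Suc i), G i] @ r) ([G (Suc (Suc i)), G (Suc i)] @ Xw i @ r)"
    using XL2[OF assms(1) v[of i]] weq_Cons[OF XL1[OF assms], of "G (Suc (Suc i))"] weq_trans assms by simp
  have a: "weq (Xw i @ G i # G (Suc i) # G i # r) (G (Suc i) # Xw i @ G (Suc i) # G i # r)"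
    using XL1[of i "G (Suc i) # G i # r"] assms by simp
  have b: "weq (G (Suc i) # Xw i @ G (Suc i) # G i # r) (G (Suc i) # G (Suc (Suc i)) # Xw i @ G i # r)"
    using weq_Cons[OF XL2[of i "G i # r"], of "G (Suc i)"] assms by simp
  have c: "weq (G (Suc i) # G (Suc (Suc i)) # Xw i @ G i # r) (G (Suc i) # G (Suc (Suc i)) # G (Suc i) # Xw i @ r)"
    using weq_ctx[OF XL1[OF assms], of "[G (Suc i), G (Suc (Suc i))]" "[]"] assms by simp
  show "weq (Xw i @ [G i, G (Suc i), G i] @ r) ([G (Suc i), G (Suc (Suc i)), G (Suc i)] @ Xw i @ r)"
    using weq_trans[OF weq_trans[OF a b] c] by simp
qed

lemma Psi_shift: assumes "1 \<le> i" "valid_word p" "valid_word r"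
  shows "Psi (Suc i) p (Xw i @ r) = Psi i (p @ Xw i) r"
proof -
  have Xv: "valid_word (Xw i)" using assms by (simp add: Xw_def)
  have P: "Phi (Suc i) p y' (Xw i @ r) = Phi i (p @ Xw i) y r"
    if yy: "weq (Xw i @ y @ r) (y' @ Xw i @ r)" "valid_word y" "valid_word y'" for y y'
    unfolding Phi_def
  proof (intro sum.cong refl)
    fix a b c
    have "tr (p @ Xw i @ Mw i a b c @ y @ r) = tr (p @ Mw (Suc i) a b c @ Xw i @ y @ r)"
      using weq_tr[OF X_M[OF assms(1), of a b c], of p "y @ r"] assms yy by simp
    also have "\<dots> = tr (p @ Mw (Suc i) a b c @ y' @ Xw i @ r)"
      using weq_tr[OF yy(1), of "p @ Mw (Suc i) a b c" "[]"] assms Mw_valid[of "Suc i"] by simp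
    finally show "tr (p @ Mw (Suc i) a b c @ y' @ Xw i @ r) = tr ((p @ Xw i) @ Mw i a b c @ y @ r)" by simp
  qed
  show ?thesis unfolding Psi_def
    using P[OF X_sig(1)[OF assms(1,3)]] P[OF X_sig(2)[OF assms(1,3)]] P[OF X_sig(3)[OF assms(1,3)]]
      P[OF X_sig(4)[OF assms(1,3)]] P[OF X_sig(5)[OF assms(1,3)]] P[OF X_sig(6)[OF assms(1,3)]] assms(1)
    by simp
qed


lemma conj_step: assumes i1: "1 \<le> i" and n: "Suc (Suc (Suc i)) \<le> n"
  and IH: "\<forall>p q. p \<in> words n \<longrightarrow> q \<in> words n \<longrightarrow> Psi i p q = 0"
  and p: "p \<in> words n" and q: "q \<in> words n"
  shows "Psi (Suc i) p q = 0"
proof -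
  have pv: "valid_word p" "valid_word q" using p q words_valid by blast+
  have Xn: "Xw i \<in> words n" using i1 n by (simp add: Xw_def)
  have l3: "Psi (Suc i) p ([G i, G (Suc i)] @ y2 @ y1 @ q) = 0"
    if y2: "y2 \<in> words n" and y1: "y1 \<in> words n" for y1 y2
  proof -
    have v: "valid_word y1" "valid_word y2" using y1 y2 words_valid by blast+
    have "Psi (Suc i) p ([G i, G (Suc i)] @ y2 @ y1 @ q)
        = ftr (\<lambda>w. Psi (Suc i) p ([G i, G (Suc i)] @ G (Suc (Suc i)) # w @ y2 @ y1 @ q)) (INV d u (Suc (Suc i)))"
      by (rule Psi_ins) (use i1 pv v in auto)
    also have "\<dots> = 0"
    proof (rule ftr_zero, intro ballI)
      fix c assume c: "c \<in> set (INV d u (Suc (Suc i)))"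
      have y3: "snd c \<in> words n" by (rule INV_words[OF _ _ c]) (use n in auto)
      have "Psi (Suc i) p ([G i, G (Suc i)] @ G (Suc (Suc i)) # snd c @ y2 @ y1 @ q)
          = Psi (Suc i) p (Xw i @ (snd c @ y2 @ y1 @ q))" by (simp add: Xw_def)
      also have "\<dots> = Psi i (p @ Xw i) (snd c @ y2 @ y1 @ q)"
        by (rule Psi_shift) (use i1 pv v y3 words_valid in auto)
      also have "\<dots> = 0" using IH p Xn y1 y2 y3 q by simp
      finally show "Psi (Suc i) p ([G i, G (Suc i)] @ G (Suc (Suc i)) # snd c @ y2 @ y1 @ q) = 0" .
    qed
    finally show ?thesis .
  qed
  have l2: "Psi (Suc i) p ([G i] @ y1 @ q) = 0" if y1: "y1 \<in> words n" for y1
  proof -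
    have v: "valid_word y1" using y1 words_valid by blast
    have "Psi (Suc i) p ([G i] @ y1 @ q) = ftr (\<lambda>w. Psi (Suc i) p ([G i] @ G (Suc i) # w @ y1 @ q)) (INV d u (Suc i))"
      by (rule Psi_ins) (use i1 pv v in auto)
    also have "\<dots> = 0"
    proof (rule ftr_zero, intro ballI)
      fix c assume c: "c \<in> set (INV d u (Suc i))"
      have y2: "snd c \<in> words n" by (rule INV_words[OF _ _ c]) (use n in auto)
      show "Psi (Suc i) p ([G i] @ G (Suc i) # snd c @ y1 @ q) = 0" using l3[OF y2 y1] by simp
    qed
    finally show ?thesis .
  qed
  have "Psi (Suc i) p ([] @ q) = ftr (\<lambda>w. Psi (Suc i) p ([] @ G i # w @ q)) (INV d u i)"
    by (rule Psi_ins) (use i1 pv in auto)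
  also have "\<dots> = 0"
  proof (rule ftr_zero, intro ballI)
    fix c assume c: "c \<in> set (INV d u i)"
    have y1: "snd c \<in> words n" by (rule INV_words[OF _ _ c]) (use i1 n in auto)
    show "Psi (Suc i) p ([] @ G i # snd c @ q) = 0" using l2[OF y1] by simp
  qed
  finally show ?thesis by simp
qed

lemma all_i: assumes "Psi 1 [] [] = 0" "3 \<le> n"
  shows "1 \<le> i \<Longrightarrow> i + 2 \<le> n \<Longrightarrow> \<forall>p q. p \<in> words n \<longrightarrow> q \<in> words n \<longrightarrow> Psi i p q = 0"
proof (induct i rule: nat_induct_at_least)
  case base
  show ?case
  proof (intro allI impI)
    fix p q assume pq: "p \<in> words n" "q \<in> words n"
    have "Psi 1 p q = Psi 1 (q @ p) []" by (rule Psi_trc) (use pq words_valid in auto)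
    also have "\<dots> = 0" using Zall[OF assms] pq by simp
    finally show "Psi 1 p q = 0" .
  qed
next
  case (Suc i)
  then show ?case using conj_step[of i n] by simp
qed

end


context MT begin

lemma trT1: "tr (replicate a (T 1)) = x (a mod d)"
  using mTk[of "[]" 0 a] tr_Nil by simp

lemma trT12: "tr (replicate a (T 1) @ replicate b (T 2)) = x (a mod d) * x (b mod d)"
  using mTk[of "replicate a (T 1)" 1 b] trT1 by (simp add: numeral_2_eq_2)

lemma trM: "tr (replicate a (T 1) @ replicate b (T 2) @ replicate c (T 3)) = x (a mod d) * x (b mod d) * x (c mod d)"
  using mTk[of "replicate a (T 1) @ replicate b (T 2)" 2 c] trT12 by (simp add: numeral_2_eq_2 numeral_3_eq_3)

lemma trG1: "tr (replicate a (T 1) @ replicate b (T 2) @ [G 1]) = z * x ((a + b) mod d)"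
proof -
  have "tr (replicate a (T 1) @ replicate b (T 2) @ [G 1]) = tr (replicate a (T 1) @ G 1 # replicate b (T 1))"
    using weq_tr[OF tg_rep[of 1 2 b], of "replicate a (T 1)" "[]"] by (simp add: sw_def)
  also have "\<dots> = tr ((replicate b (T 1) @ replicate a (T 1)) @ [G 1])"
    using trc[of "replicate a (T 1) @ [G 1]" "replicate b (T 1)"] by simp
  also have "\<dots> = z * tr (replicate b (T 1) @ replicate a (T 1))" by (rule mG) auto
  also have "\<dots> = z * x ((a + b) mod d)" using trT1[of "b + a"] by (simp add: replicate_add[symmetric] add.commute)
  finally show ?thesis .
qed


abbreviation "R1 k \<equiv> replicate k (T 1)"
abbreviation "R2 k \<equiv> replicate k (T 2)"
abbreviation "R3 k \<equiv> replicate k (T 3)"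

lemma Mw1: "Mw 1 a b c = R1 a @ R2 b @ R3 c" by (simp add: Mw_def numeral_2_eq_2 numeral_3_eq_3)

lemma t1: "tr (R1 a @ R2 b @ R3 c @ [G 1]) = z * x ((a + b) mod d) * x (c mod d)"
proof -
  have "tr (R1 a @ R2 b @ R3 c @ [G 1]) = tr ((R1 a @ R2 b @ [G 1]) @ R3 c)"
    using weq_tr[OF tg_rep[of 1 3 c], of "R1 a @ R2 b" "[]"] by (simp add: sw_def)
  also have "\<dots> = x (c mod d) * tr (R1 a @ R2 b @ [G 1])"
    using mTk[of "R1 a @ R2 b @ [G 1]" 2 c] by (simp add: numeral_3_eq_3)
  finally show ?thesis using trG1 by simp
qed

lemma t2: "tr (R1 a @ R2 b @ R3 c @ [G 2]) = z * x (a mod d) * x ((b + c) mod d)"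
proof -
  have "tr (R1 a @ R2 b @ R3 c @ [G 2]) = tr (R1 a @ R2 b @ G 2 # R2 c)"
    using weq_tr[OF tg_rep[of 2 3 c], of "R1 a @ R2 b" "[]"] by (simp add: sw_def)
  also have "\<dots> = tr ((R2 c @ R1 a @ R2 b) @ [G 2])"
    using trc[of "R1 a @ R2 b @ [G 2]" "R2 c"] by simp
  also have "\<dots> = z * tr (R2 c @ R1 a @ R2 b)" by (rule mG) auto
  also have "tr (R2 c @ R1 a @ R2 b) = tr (R1 a @ R2 (b + c))"
  proof -
    have "weq (R2 c @ R1 a @ R2 b) (R1 a @ R2 (b + c))" by (rule tw_norm) (auto simp: ac_simps)
    then show ?thesis using weq_tr0 by blast
  qed
  finally show ?thesis using trT12 by simp
qed

lemma t3: "tr (R1 a @ R2 b @ R3 c @ [G 1, G 2]) = z * z * x ((a + b + c) mod d)"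
proof -
  have "tr (R1 a @ R2 b @ R3 c @ [G 1, G 2]) = tr (R1 a @ R2 b @ G 1 # (R3 c @ [G 2]))"
    using weq_tr[OF tg_rep[of 1 3 c], of "R1 a @ R2 b" "[G 2]"] by (simp add: sw_def)
  also have "\<dots> = tr (R1 a @ R2 b @ G 1 # G 2 # R2 c)"
    using weq_tr[OF tg_rep[of 2 3 c], of "R1 a @ R2 b @ [G 1]" "[]"] by (simp add: sw_def)
  also have "\<dots> = tr ((R2 c @ R1 a @ R2 b @ [G 1]) @ [G 2])"
    using trc[of "R1 a @ R2 b @ [G 1, G 2]" "R2 c"] by simp
  also have "\<dots> = z * tr (R2 c @ R1 a @ R2 b @ [G 1])" by (rule mG) auto
  also have "tr (R2 c @ R1 a @ R2 b @ [G 1]) = tr (R1 a @ R2 (b + c) @ [G 1])"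
  proof -
    have "weq (R2 c @ R1 a @ R2 b) (R1 a @ R2 (b + c))" by (rule tw_norm) (auto simp: ac_simps)
    from weq_tr[OF this, of "[]" "[G 1]"] show ?thesis by simp
  qed
  finally show ?thesis using trG1[of a "b + c"] by (simp add: add.assoc)
qed

lemma t4: "tr (R1 a @ R2 b @ R3 c @ [G 2, G 1]) = z * z * x ((a + b + c) mod d)"
proof -
  have "tr (R1 a @ R2 b @ R3 c @ [G 2, G 1]) = tr ((G 1 # R1 a @ R2 b @ R3 c) @ [G 2])"
    using trc[of "R1 a @ R2 b @ R3 c @ [G 2]" "[G 1]"] by simp
  also have "weq (G 1 # R1 a @ R2 b @ R3 c) (map (tsw 1) (R1 a @ R2 b @ R3 c) @ [G 1])"
    by (rule gtw) auto
  then have "tr ((G 1 # R1 a @ R2 b @ R3 c) @ [G 2]) = tr ((R2 a @ R1 b @ R3 c) @ [G 1, G 2])"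
    using weq_tr[of "G 1 # R1 a @ R2 b @ R3 c" _ "[]" "[G 2]"] by (simp add: sw_def numeral_2_eq_2 numeral_3_eq_3)
  also have "\<dots> = tr (R1 b @ R2 a @ R3 c @ [G 1, G 2])"
  proof -
    have "weq (R2 a @ R1 b @ R3 c) (R1 b @ R2 a @ R3 c)" by (rule tw_norm) (auto simp: ac_simps)
    from weq_tr[OF this, of "[]" "[G 1, G 2]"] show ?thesis by simp
  qed
  finally show ?thesis using t3[of b a c] by (simp add: add.commute add.left_commute)
qed


lemma t5: "tr (R1 a @ R2 b @ R3 c @ [G 1, G 2, G 1]) = z * (x ((a + c) mod d) * x (b mod d)
   + (u - 1) * (1 / of_nat d * (\<Sum>s<d. x ((a + c + s) mod d) * x ((b + (d - s)) mod d)))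
   + (u - 1) * (z * x ((a + b + c) mod d)))"
proof -
  have "tr (R1 a @ R2 b @ R3 c @ [G 1, G 2, G 1]) = tr (R1 a @ R2 b @ G 1 # R3 c @ [G 2, G 1])"
    using weq_tr[OF tg_rep[of 1 3 c], of "R1 a @ R2 b" "[G 2, G 1]"] by (simp add: sw_def)
  also have "\<dots> = tr (R1 a @ R2 b @ G 1 # G 2 # R2 c @ [G 1])"
    using weq_tr[OF tg_rep[of 2 3 c], of "R1 a @ R2 b @ [G 1]" "[G 1]"] by (simp add: sw_def)
  also have "\<dots> = tr (R1 a @ R2 b @ G 1 # G 2 # G 1 # R1 c)"
    using weq_tr[OF tg_rep[of 1 2 c], of "R1 a @ R2 b @ [G 1, G 2]" "[]"] by (simp add: sw_def)
  also have "\<dots> = tr (R1 c @ R1 a @ R2 b @ [G 1, G 2, G 1])"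
    using trc[of "R1 a @ R2 b @ [G 1, G 2, G 1]" "R1 c"] by simp
  also have "\<dots> = tr ((G 1 # R1 c @ R1 a @ R2 b @ [G 1]) @ [G 2])"
    using trc[of "R1 c @ R1 a @ R2 b @ [G 1, G 2]" "[G 1]"] by simp
  also have "\<dots> = z * tr (G 1 # R1 c @ R1 a @ R2 b @ [G 1])" by (rule mG) auto
  also have "tr (G 1 # R1 c @ R1 a @ R2 b @ [G 1]) = tr (R1 (c + a) @ R2 b @ G 1 # G 1 # [])"
    using trc[of "[G 1]" "R1 c @ R1 a @ R2 b @ [G 1]"] by (simp add: replicate_add)
  also have "\<dots> = tr (R1 (c + a) @ R2 b @ []) + (u - 1) * (1 / of_nat d * (\<Sum>s<d. tr ((R1 (c + a) @ R2 b) @ Ew d 1 s @ [])))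
      + (u - 1) * (1 / of_nat d * (\<Sum>s<d. tr ((R1 (c + a) @ R2 b) @ Ew d 1 s @ G 1 # [])))"
    using quad[of 1 "R1 (c + a) @ R2 b" "[]"] by simp
  also have "(\<Sum>s<d. tr ((R1 (c + a) @ R2 b) @ Ew d 1 s @ [])) = (\<Sum>s<d. x ((a + c + s) mod d) * x ((b + (d - s)) mod d))"
  proof (rule sum.cong[OF refl])
    fix s
    have "weq ((R1 (c + a) @ R2 b) @ Ew d 1 s) (R1 (a + c + s) @ R2 (b + (d - s)))"
      by (rule tw_norm) (auto simp: Ew_def ac_simps numeral_2_eq_2)
    then show "tr ((R1 (c + a) @ R2 b) @ Ew d 1 s @ []) = x ((a + c + s) mod d) * x ((b + (d - s)) mod d)"
      using weq_tr0 trT12 by simp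
  qed
  also have "(\<Sum>s<d. tr ((R1 (c + a) @ R2 b) @ Ew d 1 s @ G 1 # [])) = (\<Sum>s<d. z * x ((a + b + c) mod d))"
  proof (rule sum.cong[OF refl])
    fix s assume s: "s \<in> {..<d}"
    have "weq ((R1 (c + a) @ R2 b) @ Ew d 1 s) (R1 (a + c + s) @ R2 (b + (d - s)))"
      by (rule tw_norm) (auto simp: Ew_def ac_simps numeral_2_eq_2)
    from weq_tr[OF this, of "[]" "[G 1]"]
    have "tr ((R1 (c + a) @ R2 b) @ Ew d 1 s @ G 1 # []) = z * x ((a + c + s + (b + (d - s))) mod d)"
      using trG1 by simp
    also have "a + c + s + (b + (d - s)) = (a + b + c) + d" using s by simp
    finally show "tr ((R1 (c + a) @ R2 b) @ Ew d 1 s @ G 1 # []) = z * x ((a + b + c) mod d)" by simp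
  qed
  finally show ?thesis using d1 trT12 by (simp add: add.commute)
qed


definition SX :: complex where "SX = (\<Sum>k<d. x k)"

lemma L0: "(\<Sum>c<d. K * x (c mod d)) = K * SX"
  by (simp add: SX_def sum_distrib_left)
lemma L1: "(\<Sum>c<d. K * x ((k + c) mod d)) = K * SX"
  using sum_shift_mod'[of x k d] by (simp add: SX_def sum_distrib_left[symmetric])
lemma L2: "(\<Sum>c<d. x ((k + c) mod d) * K) = SX * K"
  using sum_shift_mod'[of x k d] by (simp add: SX_def sum_distrib_right[symmetric])
lemma L3: "(\<Sum>c<d. x (c mod d) * K) = SX * K"
  by (simp add: SX_def sum_distrib_right)
lemma L4: "(\<Sum>c<d. x ((k + c) mod d)) = SX"
  using sum_shift_mod'[of x k d] by (simp add: SX_def)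

lemma L5: "(\<Sum>c<d. x c) = SX" by (simp add: SX_def)

lemma F0: "(\<Sum>a<d. \<Sum>b<d. \<Sum>c<d. x (a mod d) * x (b mod d) * x (c mod d)) = SX ^ 3"
  apply simp
  apply (simp only: sum_distrib_left[symmetric] sum_distrib_right[symmetric] mult.assoc)
  apply (simp add: L4 L5 power3_eq_cube)
  done

lemma F1: "(\<Sum>a<d. \<Sum>b<d. \<Sum>c<d. z * x ((a + b) mod d) * x (c mod d)) = z * of_nat d * SX ^ 2"
  apply simp
  apply (simp only: sum_distrib_left[symmetric] sum_distrib_right[symmetric] mult.assoc)
  apply (simp add: L4 L5 power2_eq_square)
  done

lemma F2: "(\<Sum>a<d. \<Sum>b<d. \<Sum>c<d. z * x (a mod d) * x ((b + c) mod d)) = z * of_nat d * SX ^ 2"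
  apply simp
  apply (simp only: sum_distrib_left[symmetric] sum_distrib_right[symmetric] mult.assoc)
  apply (simp add: L4 L5 power2_eq_square)
  done

lemma F3: "(\<Sum>a<d. \<Sum>b<d. \<Sum>c<d. z * z * x ((a + b + c) mod d)) = z ^ 2 * of_nat d ^ 2 * SX"
  apply (simp only: sum_distrib_left[symmetric] sum_distrib_right[symmetric] mult.assoc)
  apply (simp add: L4 L5 power2_eq_square)
  done


lemma L6: "(\<Sum>c<d. x ((c + k) mod d)) = SX"
  using sum_shift_mod[of x k d] by (simp add: SX_def)

lemma F5a: "(\<Sum>a<d. \<Sum>b<d. \<Sum>c<d. x ((a + c) mod d) * x (b mod d)) = of_nat d * SX ^ 2"
  apply simp
  apply (simp only: sum_distrib_left[symmetric] sum_distrib_right[symmetric] mult.assoc)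
  apply (simp add: L4 L5 power2_eq_square)
  done

lemma F5c: "(\<Sum>a<d. \<Sum>b<d. \<Sum>c<d. x ((a + b + c) mod d)) = of_nat d ^ 2 * SX"
  by (simp add: L4 power2_eq_square)

lemma F5b: "(\<Sum>a<d. \<Sum>b<d. \<Sum>c<d. \<Sum>s<d. x ((a + c + s) mod d) * x ((b + (d - s)) mod d)) = of_nat d ^ 2 * SX ^ 2"
proof -
  have i1: "(\<Sum>c<d. \<Sum>s<d. x ((a + c + s) mod d) * x ((b + (d - s)) mod d)) = (\<Sum>s<d. SX * x ((b + (d - s)) mod d))" for a b
  proof -
    have "(\<Sum>c<d. \<Sum>s<d. x ((a + c + s) mod d) * x ((b + (d - s)) mod d))
        = (\<Sum>s<d. \<Sum>c<d. x ((a + c + s) mod d) * x ((b + (d - s)) mod d))" by (rule sum.swap)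
    also have "\<dots> = (\<Sum>s<d. SX * x ((b + (d - s)) mod d))"
    proof (rule sum.cong[OF refl])
      fix s
      have "(\<Sum>c<d. x ((a + c + s) mod d) * x ((b + (d - s)) mod d)) = (\<Sum>c<d. x ((a + s + c) mod d) * x ((b + (d - s)) mod d))"
        by (rule sum.cong[OF refl]) (simp add: ac_simps)
      also have "\<dots> = (\<Sum>c<d. x ((a + s + c) mod d)) * x ((b + (d - s)) mod d)"
        by (rule sum_distrib_right[symmetric])
      also have "\<dots> = SX * x ((b + (d - s)) mod d)" using L4[of "a + s"] by simp
      finally show "(\<Sum>c<d. x ((a + c + s) mod d) * x ((b + (d - s)) mod d)) = SX * x ((b + (d - s)) mod d)" .
    qed
    finally show ?thesis .
  qed
  have i2: "(\<Sum>b<d. \<Sum>s<d. SX * x ((b + (d - s)) mod d)) = of_nat d * SX ^ 2"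
  proof -
    have "(\<Sum>b<d. \<Sum>s<d. SX * x ((b + (d - s)) mod d)) = (\<Sum>s<d. \<Sum>b<d. SX * x ((b + (d - s)) mod d))"
      by (rule sum.swap)
    also have "\<dots> = (\<Sum>s<d. SX * SX)"
    proof (rule sum.cong[OF refl])
      fix s show "(\<Sum>b<d. SX * x ((b + (d - s)) mod d)) = SX * SX"
        using L6[of "d - s"] by (simp add: sum_distrib_left[symmetric])
    qed
    finally show ?thesis by (simp add: power2_eq_square)
  qed
  have "(\<Sum>a<d. \<Sum>b<d. \<Sum>c<d. \<Sum>s<d. x ((a + c + s) mod d) * x ((b + (d - s)) mod d))
      = (\<Sum>a<d. \<Sum>b<d. \<Sum>s<d. SX * x ((b + (d - s)) mod d))"
    using i1 by simp
  also have "\<dots> = (\<Sum>a<d. of_nat d * SX ^ 2)" using i2 by simp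
  finally show ?thesis by (simp add: power2_eq_square)
qed

lemma F5: "(\<Sum>a<d. \<Sum>b<d. \<Sum>c<d. z * (x ((a + c) mod d) * x (b mod d)
   + (u - 1) * (1 / of_nat d * (\<Sum>s<d. x ((a + c + s) mod d) * x ((b + (d - s)) mod d)))
   + (u - 1) * (z * x ((a + b + c) mod d))))
   = z * (of_nat d * SX ^ 2 + (u - 1) * of_nat d * SX ^ 2 + (u - 1) * z * of_nat d ^ 2 * SX)"
proof -
  have dn: "of_nat d \<noteq> (0::complex)" using d1 by simp
  have "(\<Sum>a<d. \<Sum>b<d. \<Sum>c<d. z * (x ((a + c) mod d) * x (b mod d)
   + (u - 1) * (1 / of_nat d * (\<Sum>s<d. x ((a + c + s) mod d) * x ((b + (d - s)) mod d)))
   + (u - 1) * (z * x ((a + b + c) mod d))))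
   = z * ((\<Sum>a<d. \<Sum>b<d. \<Sum>c<d. x ((a + c) mod d) * x (b mod d))
       + (u - 1) * (1 / of_nat d * (\<Sum>a<d. \<Sum>b<d. \<Sum>c<d. \<Sum>s<d. x ((a + c + s) mod d) * x ((b + (d - s)) mod d)))
       + (u - 1) * (z * (\<Sum>a<d. \<Sum>b<d. \<Sum>c<d. x ((a + b + c) mod d))))"
    by (simp only: sum.distrib sum_distrib_left distrib_left)
  also have "\<dots> = z * (of_nat d * SX ^ 2 + (u - 1) * of_nat d * SX ^ 2 + (u - 1) * z * of_nat d ^ 2 * SX)"
    unfolding F5a F5b F5c using dn by (simp add: power2_eq_square)
  finally show ?thesis .
qed

lemma PsiVal: "Psi 1 [] [] = SX ^ 3 + (u + 2) * of_nat d * z * SX ^ 2 + (u + 1) * of_nat d ^ 2 * z ^ 2 * SX"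
proof -
  have p0: "Phi 1 [] [] [] = SX ^ 3"
  proof -
    have "Phi 1 [] [] [] = (\<Sum>a<d. \<Sum>b<d. \<Sum>c<d. x (a mod d) * x (b mod d) * x (c mod d))"
      unfolding Phi_def Mw1 using trM by simp
    then show ?thesis using F0 by simp
  qed
  have p1: "Phi 1 [] [G 1] [] = z * of_nat d * SX ^ 2"
  proof -
    have "Phi 1 [] [G 1] [] = (\<Sum>a<d. \<Sum>b<d. \<Sum>c<d. z * x ((a + b) mod d) * x (c mod d))"
      unfolding Phi_def Mw1 using t1 by simp
    then show ?thesis using F1 by simp
  qed
  have p2: "Phi 1 [] [G 2] [] = z * of_nat d * SX ^ 2"
  proof -
    have "Phi 1 [] [G 2] [] = (\<Sum>a<d. \<Sum>b<d. \<Sum>c<d. z * x (a mod d) * x ((b + c) mod d))"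
      unfolding Phi_def Mw1 using t2 by simp
    then show ?thesis using F2 by simp
  qed
  have p3: "Phi 1 [] [G 1, G 2] [] = z ^ 2 * of_nat d ^ 2 * SX"
  proof -
    have "Phi 1 [] [G 1, G 2] [] = (\<Sum>a<d. \<Sum>b<d. \<Sum>c<d. z * z * x ((a + b + c) mod d))"
      unfolding Phi_def Mw1 using t3 by simp
    then show ?thesis using F3 by simp
  qed
  have p4: "Phi 1 [] [G 2, G 1] [] = z ^ 2 * of_nat d ^ 2 * SX"
  proof -
    have "Phi 1 [] [G 2, G 1] [] = (\<Sum>a<d. \<Sum>b<d. \<Sum>c<d. z * z * x ((a + b + c) mod d))"
      unfolding Phi_def Mw1 using t4 by simp
    then show ?thesis using F3 by simp
  qed
  have p5: "Phi 1 [] [G 1, G 2, G 1] [] = z * (of_nat d * SX ^ 2 + (u - 1) * of_nat d * SX ^ 2 + (u - 1) * z * of_nat d ^ 2 * SX)"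
  proof -
    have "Phi 1 [] [G 1, G 2, G 1] [] = (\<Sum>a<d. \<Sum>b<d. \<Sum>c<d. z * (x ((a + c) mod d) * x (b mod d)
         + (u - 1) * (1 / of_nat d * (\<Sum>s<d. x ((a + c + s) mod d) * x ((b + (d - s)) mod d)))
         + (u - 1) * (z * x ((a + b + c) mod d))))"
      unfolding Phi_def Mw1 using t5 by simp
    then show ?thesis using F5 by simp
  qed
  have "Psi 1 [] [] = Phi 1 [] [] [] + Phi 1 [] [G 1] [] + Phi 1 [] [G 2] [] + Phi 1 [] [G 1, G 2] []
      + Phi 1 [] [G 2, G 1] [] + Phi 1 [] [G 1, G 2, G 1] []"
    unfolding Psi_def by (simp add: numeral_2_eq_2)
  then show ?thesis unfolding p0 p1 p2 p3 p4 p5 by (simp add: algebra_simps power2_eq_square)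
qed


lemma E1: "(\<Sum>k<d. EE d x k) = 1 / of_nat d * SX ^ 2"
proof -
  have "(\<Sum>k<d. EE d x k) = 1 / of_nat d * (\<Sum>k<d. \<Sum>s<d. x ((k + s) mod d) * x ((d - s) mod d))"
    by (simp add: EE_def sum_distrib_left)
  also have "(\<Sum>k<d. \<Sum>s<d. x ((k + s) mod d) * x ((d - s) mod d)) = (\<Sum>s<d. \<Sum>k<d. x ((k + s) mod d) * x ((d - s) mod d))"
    by (rule sum.swap)
  also have "\<dots> = (\<Sum>s<d. SX * x ((d - s) mod d))"
    by (rule sum.cong[OF refl]) (simp add: sum_distrib_right[symmetric] L6)
  also have "\<dots> = SX * SX" using sum_reflect[of x d] by (simp add: sum_distrib_left[symmetric] SX_def)
  finally show ?thesis by (simp add: power2_eq_square)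
qed

lemma sum_list_concat_map: "sum_list (map f (concat xss)) = sum_list (map (\<lambda>xs. sum_list (map f xs)) xss)"
  by (induct xss) auto

lemma rep_app3: "replicate m g @ replicate n g @ ys = replicate (m + n) g @ ys"
  by (simp add: replicate_add)

lemma ee_val: "ftr tr (fmul (ee d k 1) (ee d 0 2)) =
   1 / of_nat d * (1 / of_nat d * (\<Sum>s<d. \<Sum>r<d. x ((k + s) mod d) * x ((d - s + r) mod d) * x ((d - r) mod d)))"
proof -
  have "ftr tr (fmul (ee d k 1) (ee d 0 2)) = (\<Sum>s<d. 1 / of_nat d * (1 / of_nat d *
      (\<Sum>r<d. tr (R1 (k + s) @ R2 (d - s) @ R2 r @ R3 (d - r)))))"
    by (simp add: ftr_fmul ee_def ftr_map sum_list_upt0 ftr_ee numeral_2_eq_2 numeral_3_eq_3 sum_divide_distrib divide_divide_eq_left)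
  also have "\<dots> = (\<Sum>s<d. 1 / of_nat d * (1 / of_nat d *
      (\<Sum>r<d. x ((k + s) mod d) * x ((d - s + r) mod d) * x ((d - r) mod d))))"
    using trM by (simp add: rep_app3)
  finally show ?thesis by (simp add: sum_distrib_left)
qed

lemma E2: "(\<Sum>k<d. ftr tr (fmul (ee d k 1) (ee d 0 2))) = 1 / of_nat d * (1 / of_nat d * SX ^ 3)"
proof -
  have A: "(\<Sum>k<d. \<Sum>s<d. \<Sum>r<d. x ((k + s) mod d) * x ((d - s + r) mod d) * x ((d - r) mod d))
      = (\<Sum>s<d. \<Sum>r<d. SX * x ((d - s + r) mod d) * x ((d - r) mod d))"
  proof -
    have "(\<Sum>k<d. \<Sum>s<d. \<Sum>r<d. x ((k + s) mod d) * x ((d - s + r) mod d) * x ((d - r) mod d))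
      = (\<Sum>s<d. \<Sum>k<d. \<Sum>r<d. x ((k + s) mod d) * x ((d - s + r) mod d) * x ((d - r) mod d))"
      by (rule sum.swap)
    also have "\<dots> = (\<Sum>s<d. \<Sum>r<d. \<Sum>k<d. x ((k + s) mod d) * x ((d - s + r) mod d) * x ((d - r) mod d))"
      by (rule sum.cong[OF refl], rule sum.swap)
    also have "\<dots> = (\<Sum>s<d. \<Sum>r<d. SX * x ((d - s + r) mod d) * x ((d - r) mod d))"
      by (intro sum.cong refl) (simp add: sum_distrib_right[symmetric] L6)
    finally show ?thesis .
  qed
  have B: "(\<Sum>s<d. x ((d - s + r) mod d)) = SX" for r
  proof -
    have "(\<Sum>s<d. x ((d - s + r) mod d)) = (\<Sum>s<d. (\<lambda>t. x ((t + r) mod d)) ((d - s) mod d))"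
      by (simp add: mod_add_left_eq)
    also have "\<dots> = (\<Sum>t<d. x ((t + r) mod d))" by (rule sum_reflect)
    finally show ?thesis using L6 by simp
  qed
  have C: "(\<Sum>s<d. \<Sum>r<d. SX * x ((d - s + r) mod d) * x ((d - r) mod d)) = SX * SX * SX"
  proof -
    have "(\<Sum>s<d. \<Sum>r<d. SX * x ((d - s + r) mod d) * x ((d - r) mod d))
        = (\<Sum>r<d. \<Sum>s<d. SX * x ((d - s + r) mod d) * x ((d - r) mod d))" by (rule sum.swap)
    also have "\<dots> = (\<Sum>r<d. SX * SX * x ((d - r) mod d))"
    proof (rule sum.cong[OF refl])
      fix r show "(\<Sum>s<d. SX * x ((d - s + r) mod d) * x ((d - r) mod d)) = SX * SX * x ((d - r) mod d)"
        using B[of r] by (simp add: sum_distrib_right[symmetric] sum_distrib_left[symmetric])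
    qed
    also have "\<dots> = SX * SX * SX" using sum_reflect[of x d] by (simp add: sum_distrib_left[symmetric] SX_def)
    finally show ?thesis .
  qed
  show ?thesis unfolding ee_val using A C by (simp add: sum_divide_distrib[symmetric] power3_eq_cube)
qed

lemma cc_Psi: "ftr tr (fmul (fmul (wd a) (cc d i)) (wd b)) = Psi i a b"
proof -
  have "ftr tr (fmul (fmul (wd a) (cc d i)) (wd b)) = ftr (\<lambda>w. tr (a @ w @ b)) (cc d i)" by (rule ftr_ctx)
  also have "\<dots> = (\<Sum>a'<d. \<Sum>b'<d. \<Sum>c<d.
      tr (a @ Mw i a' b' c @ b) + tr (a @ Mw i a' b' c @ G i # b) + tr (a @ Mw i a' b' c @ G (Suc i) # b)
      + tr (a @ Mw i a' b' c @ G i # G (Suc i) # b) + tr (a @ Mw i a' b' c @ G (Suc i) # G i # b)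
      + tr (a @ Mw i a' b' c @ G i # G (Suc i) # G i # b))"
    by (simp add: cc_def ftr_fmul gsum_def sum_list_concat_map sum_list_upt0 Mw_def comp_def add.assoc)
  also have "\<dots> = Psi i a b" by (simp add: Psi_def Phi_def sum.distrib)
  finally show ?thesis .
qed

end

theorem theorem6:
  fixes d n :: nat and u z :: complex and x :: "nat \<Rightarrow> complex"
    and tr :: "gen list \<Rightarrow> complex"
  assumes "d \<ge> 1" and "n \<ge> 3" and "u \<noteq> 0" and "x 0 = 1"
    and "markov_trace d u z x tr"
  shows "(\<forall>i a b. 1 \<le> i \<longrightarrow> i \<le> n - 2 \<longrightarrow> a \<in> words n \<longrightarrow> b \<in> words n \<longrightarrow>
             ftr tr (fmul (fmul (wd a) (cc d i)) (wd b)) = 0)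
         \<longleftrightarrow>
         (u + 1) * z^2 * (\<Sum>k<d. x k) + (u + 2) * z * (\<Sum>k<d. EE d x k)
           + (\<Sum>k<d. ftr tr (fmul (ee d k 1) (ee d 0 2))) = 0"
proof -
  interpret MT d u z x tr using assms by unfold_locales auto
  have dn: "of_nat d \<noteq> (0::complex)" using assms(1) by simp
  have key: "Psi 1 [] [] = of_nat d ^ 2 * ((u + 1) * z^2 * (\<Sum>k<d. x k) + (u + 2) * z * (\<Sum>k<d. EE d x k)
           + (\<Sum>k<d. ftr tr (fmul (ee d k 1) (ee d 0 2))))"
    unfolding PsiVal E1 E2 SX_def[symmetric] using dn by (simp add: field_simps power2_eq_square power3_eq_cube)
  have iff: "Psi 1 [] [] = 0 \<longleftrightarrow> (u + 1) * z^2 * (\<Sum>k<d. x k) + (u + 2) * z * (\<Sum>k<d. EE d x k)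
           + (\<Sum>k<d. ftr tr (fmul (ee d k 1) (ee d 0 2))) = 0"
    unfolding key using dn by simp
  show ?thesis
  proof
    assume L: "\<forall>i a b. 1 \<le> i \<longrightarrow> i \<le> n - 2 \<longrightarrow> a \<in> words n \<longrightarrow> b \<in> words n \<longrightarrow>
             ftr tr (fmul (fmul (wd a) (cc d i)) (wd b)) = 0"
    have "ftr tr (fmul (fmul (wd []) (cc d 1)) (wd [])) = 0" using L assms(2) by auto
    then have "Psi 1 [] [] = 0" using cc_Psi by simp
    then show "(u + 1) * z^2 * (\<Sum>k<d. x k) + (u + 2) * z * (\<Sum>k<d. EE d x k)
           + (\<Sum>k<d. ftr tr (fmul (ee d k 1) (ee d 0 2))) = 0" using iff by simp
  next
    assume "(u + 1) * z^2 * (\<Sum>k<d. x k) + (u + 2) * z * (\<Sum>k<d. EE d x k)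
           + (\<Sum>k<d. ftr tr (fmul (ee d k 1) (ee d 0 2))) = 0"
    then have P: "Psi 1 [] [] = 0" using iff by simp
    show "\<forall>i a b. 1 \<le> i \<longrightarrow> i \<le> n - 2 \<longrightarrow> a \<in> words n \<longrightarrow> b \<in> words n \<longrightarrow>
             ftr tr (fmul (fmul (wd a) (cc d i)) (wd b)) = 0"
    proof (intro allI impI)
      fix i a b assume h: "1 \<le> i" "i \<le> n - 2" "a \<in> words n" "b \<in> words n"
      have "i + 2 \<le> n" using h(2) assms(2) by simp
      then have "Psi i a b = 0" using all_i[OF P assms(2) h(1)] h(3,4) by blast
      then show "ftr tr (fmul (fmul (wd a) (cc d i)) (wd b)) = 0" using cc_Psi by simp
    qed
  qed
qed


end
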